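(* Let $V$ and $W$ be calibrated $R$-supermodules and regard $V\oplus W$ as a calibrated $R$-supermodule via $(V\oplus W)_{\mathfrak a}=V_{\mathfrak a}\oplus W_{\mathfrak a}$ and $(V\oplus W)_{\mathfrak c}=V_{\mathfrak c}\oplus W_{\mathfrak c}$. Then for every $d\ge 0$ the map \[\bigoplus_{d_1+d_2=d}(\tilde\Gamma^{d_1}V)\otimes(\tilde\Gamma^{d_2}W)\longrightarrow\tilde\Gamma^d(V\oplus W),\qquad y\otimes y'\mapsto y*y',\] is an isomorphism of $R$-supermodules.
   Context: Let $R$ be a principal ideal domain of characteristic $0$. Supermodules are $\mathbb Z/2$-graded and $|v|$ denotes the parity of a homogeneous element $v$. A calibrated $R$-supermodule is a free $R$-supermodule $V=V_{\bar0}\oplus V_{\bar1}$ of finite rank together with a decomposition $V_{\bar 0}=V_{\mathfrak a}\oplus V_{\mathfrak c}$ into free $R$-submodules. Fix bases $B_{\mathfrak a},B_{\mathfrak c},B_{\bar1}$ of $V_{\mathfrak a},V_{\mathfrak c},V_{\bar1}$, put $B_{\bar0}=B_{\mathfrak a}\sqcup B_{\mathfrak c}$, $B=B_{\bar0}\sqcup B_{\bar1}$, and fix a total order on $B$. The symmetric group $\mathfrak S_d$ acts on the right on $V^{\otimes d}$ by $(v_1\otimes\cdots\otimes v_d)^\sigma=(-1)^{\langle\sigma;\mathbf v\rangle}v_{\sigma1}\otimes\cdots\otimes v_{\sigma d}$ for homogeneous $v_k$, where $\langle\sigma;\mathbf v\rangle$ is the number of pairs $k<l$ with $\sigma^{-1}k>\sigma^{-1}l$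 and $|v_k|=|v_l|=\bar1$; $\Gamma^dV$ is the submodule of $\mathfrak S_d$-invariants. $\mathfrak S_d$ acts on $B^d$ by $(b_1\cdots b_d)\sigma=b_{\sigma1}\cdots b_{\sigma d}$ and $\mathbf b\sim\mathbf b'$ means they lie in one orbit. For $\mathbf b=b_1\cdots b_d\in B^d$ let $\langle\mathbf b\rangle$ be the number of pairs $k<l$ with $b_k,b_l\in B_{\bar1}$ and $b_k>b_l$, let $[\mathbf b:b]=\#\{k:b_k=b\}$ and $[\mathbf b]^!_{\mathfrak c}=\prod_{b\in B_{\mathfrak c}}[\mathbf b:b]!$. Let $\mathrm{Seq}(B,d)$ be the set of $\mathbf b\in B^d$ such that $b_k=b_l$ for some $k\ne l$ only if $b_k\in B_{\bar0}$. For $\mathbf b\in\mathrm{Seq}(B,d)$ put $x_{\mathbf b}=\sum_{\mathbf b'}(-1)^{\langle\mathbf b\rangle+\langle\mathbf b'\rangle}b'_1\otimes\cdots\otimes b'_d$ (sum over the distinct $\mathbf b'\sim\mathbf b$) and $y_{\mathbf b}=[\mathbf b]^!_{\mathfrak c}\,x_{\mathbf b}$. The modified divided power is $\tilde\Gamma^dV=\mathrm{span}_R\{y_{\mathbf b}:\mathbf b\in\mathrm{Seq}(B,d)\}\subseteq\Gamma^dV$. For $w_1\in U^{\otimes c}$, $w_2\in U^{\otimes(d-c)}$ ($U$ any supermodule) the star product is $w_1*w_2=\sum_\sigma(w_1\otimes w_2)^\sigma$, summed over the shortest coset representatives $\sigma$ of $(\mathfrak S_c\times\mathfrak S_{d-c})\backslash\mathfrak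 S_d$; here $V,W\subseteq V\oplus W$ so that $\tilde\Gamma^{d_1}V\otimes\tilde\Gamma^{d_2}W\subseteq (V\oplus W)^{\otimes d_1}\otimes(V\oplus W)^{\otimes d_2}$. *)

theory Defs
  imports Main "HOL-Combinatorics.Permutations"
begin

(* Coordinates: a free R-module with finite basis B (a finite type 'b) is
   identified with functions B => R; the tensor power V^{\<otimes>d} with functions
   'b list => R supported on lists of length d (coefficient of b1 \<otimes> ... \<otimes> bd). *)

datatype kind = KA | KC | KOdd   (* basis element in B_a, B_c, or B_1 (odd) *)

definition pid :: "'r::comm_ring_1 itself \<Rightarrow> bool" where
  "pid _ \<longleftrightarrow> (\<forall>I::'r set. (0 \<in> I \<and> (\<forall>x\<in>I. \<forall>y\<in>I. x + y \<in> I) \<and> (\<forall>r. \<forall>x\<in>I. r * x \<in> I))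
      \<longrightarrow> (\<exists>a. I = {a * x | x. True}))"

definition strict_total :: "('b \<Rightarrow> 'b \<Rightarrow> bool) \<Rightarrow> bool" where
  "strict_total lt \<longleftrightarrow> (\<forall>x. \<not> lt x x) \<and> (\<forall>x y z. lt x y \<longrightarrow> lt y z \<longrightarrow> lt x z)
      \<and> (\<forall>x y. x \<noteq> y \<longrightarrow> lt x y \<or> lt y x)"

definition rspan :: "('a \<Rightarrow> 'r::comm_ring_1) set \<Rightarrow> ('a \<Rightarrow> 'r) set" where
  "rspan S = {v. \<exists>F c. finite F \<and> F \<subseteq> S \<and> v = (\<lambda>x. \<Sum>s\<in>F. c s * s x)}"

definition inv_odd :: "('b \<Rightarrow> kind) \<Rightarrow> ('b \<Rightarrow> 'b \<Rightarrow> bool) \<Rightarrow> 'b list \<Rightarrow> nat" where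
  "inv_odd kd lt bs = card {(k,l). k < l \<and> l < length bs \<and> kd (bs!k) = KOdd \<and> kd (bs!l) = KOdd
                              \<and> lt (bs!l) (bs!k)}"

definition Seq :: "('b \<Rightarrow> kind) \<Rightarrow> nat \<Rightarrow> 'b list set" where
  "Seq kd d = {bs. length bs = d \<and> (\<forall>k l. k < d \<longrightarrow> l < d \<longrightarrow> k \<noteq> l \<longrightarrow> bs!k = bs!l \<longrightarrow> kd (bs!k) \<noteq> KOdd)}"

definition permact :: "(nat \<Rightarrow> nat) \<Rightarrow> 'b list \<Rightarrow> 'b list" where
  "permact \<sigma> bs = map (\<lambda>i. bs ! (\<sigma> i)) [0..<length bs]"

definition orbit_rel :: "'b list \<Rightarrow> 'b list \<Rightarrow> bool" where
  "orbit_rel bs' bs \<longleftrightarrow> (\<exists>\<sigma>. \<sigma> permutes {..<length bs} \<and> bs' = permact \<sigma> bs)"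

definition xvec :: "('b \<Rightarrow> kind) \<Rightarrow> ('b \<Rightarrow> 'b \<Rightarrow> bool) \<Rightarrow> 'b list \<Rightarrow> ('b list \<Rightarrow> 'r::comm_ring_1)" where
  "xvec kd lt bs = (\<lambda>c. if orbit_rel c bs then (-1) ^ (inv_odd kd lt bs + inv_odd kd lt c) else 0)"

definition mult_in :: "'b list \<Rightarrow> 'b \<Rightarrow> nat" where
  "mult_in bs b = card {k. k < length bs \<and> bs!k = b}"

definition cfact :: "('b::finite \<Rightarrow> kind) \<Rightarrow> 'b list \<Rightarrow> nat" where
  "cfact kd bs = (\<Prod>b\<in>{b. kd b = KC}. fact (mult_in bs b))"

definition yvec :: "('b::finite \<Rightarrow> kind) \<Rightarrow> ('b \<Rightarrow> 'b \<Rightarrow> bool) \<Rightarrow> 'b list \<Rightarrow> ('b list \<Rightarrow> 'r::comm_ring_1)" where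
  "yvec kd lt bs = (\<lambda>c. of_nat (cfact kd bs) * xvec kd lt bs c)"

definition tGamma :: "('b::finite \<Rightarrow> kind) \<Rightarrow> ('b \<Rightarrow> 'b \<Rightarrow> bool) \<Rightarrow> nat \<Rightarrow> ('b list \<Rightarrow> 'r::comm_ring_1) set" where
  "tGamma kd lt d = rspan {yvec kd lt bs | bs. bs \<in> Seq kd d}"

definition sgn_exp :: "('b \<Rightarrow> kind) \<Rightarrow> (nat \<Rightarrow> nat) \<Rightarrow> 'b list \<Rightarrow> nat" where
  "sgn_exp kd \<sigma> bs = card {(k,l). k < l \<and> l < length bs \<and> inv \<sigma> k > inv \<sigma> l
                            \<and> kd (bs!k) = KOdd \<and> kd (bs!l) = KOdd}"

definition act :: "('b::finite \<Rightarrow> kind) \<Rightarrow> nat \<Rightarrow> (nat \<Rightarrow> nat) \<Rightarrow> ('b list \<Rightarrow> 'r::comm_ring_1) \<Rightarrow> ('b list \<Rightarrow> 'r)" where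
  "act kd d \<sigma> t = (\<lambda>c. \<Sum>bs\<in>{bs. length bs = d}.
       if c = permact \<sigma> bs then (-1) ^ sgn_exp kd \<sigma> bs * t bs else 0)"

definition ninv :: "nat \<Rightarrow> (nat \<Rightarrow> nat) \<Rightarrow> nat" where
  "ninv d \<sigma> = card {(i,j). i < j \<and> j < d \<and> \<sigma> i > \<sigma> j}"

(* shortest representatives of the right cosets (S_c x S_{d-c}) sigma in S_d *)
definition minreps :: "nat \<Rightarrow> nat \<Rightarrow> (nat \<Rightarrow> nat) set" where
  "minreps c d = {\<sigma>. \<sigma> permutes {..<d} \<and>
      (\<forall>\<tau>. \<tau> permutes {..<d} \<and> \<tau> ` {..<c} = {..<c} \<longrightarrow> ninv d \<sigma> \<le> ninv d (\<tau> \<circ> \<sigma>))}"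

(* star product, extended linearly: w in U^{\<otimes>c} \<otimes> U^{\<otimes>(d-c)} = U^{\<otimes>d} *)
definition star :: "('b::finite \<Rightarrow> kind) \<Rightarrow> nat \<Rightarrow> nat \<Rightarrow> ('b list \<Rightarrow> 'r::comm_ring_1) \<Rightarrow> ('b list \<Rightarrow> 'r)" where
  "star kd c d w = (\<lambda>x. \<Sum>\<sigma>\<in>minreps c d. act kd d \<sigma> w x)"

definition sumkind :: "('v \<Rightarrow> kind) \<Rightarrow> ('w \<Rightarrow> kind) \<Rightarrow> ('v + 'w) \<Rightarrow> kind" where
  "sumkind kV kW = case_sum kV kW"

(* y \<otimes> y' for y in V^{\<otimes>d1}, y' in W^{\<otimes>d2}, as an element of (V\<oplus>W)^{\<otimes>(d1+d2)} *)
definition ptensor :: "nat \<Rightarrow> ('v list \<Rightarrow> 'r::comm_ring_1) \<Rightarrow> ('w list \<Rightarrow> 'r) \<Rightarrow> (('v + 'w) list \<Rightarrow> 'r)" where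
  "ptensor d1 y y' bs = (if (\<forall>x\<in>set (take d1 bs). isl x) \<and> (\<forall>x\<in>set (drop d1 bs). \<not> isl x)
       then y (map projl (take d1 bs)) * y' (map projr (drop d1 bs)) else 0)"

(* (\<Gamma>~^{d1} V) \<otimes> (\<Gamma>~^{d2} W) as a submodule of (V\<oplus>W)^{\<otimes>(d1+d2)} *)
definition tens_sub :: "('v::finite \<Rightarrow> kind) \<Rightarrow> ('v \<Rightarrow> 'v \<Rightarrow> bool) \<Rightarrow> ('w::finite \<Rightarrow> kind) \<Rightarrow> ('w \<Rightarrow> 'w \<Rightarrow> bool)
      \<Rightarrow> nat \<Rightarrow> nat \<Rightarrow> (('v + 'w) list \<Rightarrow> 'r::comm_ring_1) set" where
  "tens_sub kV ltV kW ltW d1 d2 = rspan {ptensor d1 y y' | y y'. y \<in> tGamma kV ltV d1 \<and> y' \<in> tGamma kW ltW d2}"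

(* external direct sum over d1 + d2 = d, indexed by d1 \<in> {0..d} *)
definition dsum_dom :: "('v::finite \<Rightarrow> kind) \<Rightarrow> ('v \<Rightarrow> 'v \<Rightarrow> bool) \<Rightarrow> ('w::finite \<Rightarrow> kind) \<Rightarrow> ('w \<Rightarrow> 'w \<Rightarrow> bool)
      \<Rightarrow> nat \<Rightarrow> (nat \<Rightarrow> ('v + 'w) list \<Rightarrow> 'r::comm_ring_1) set" where
  "dsum_dom kV ltV kW ltW d = {m. (\<forall>k\<le>d. m k \<in> tens_sub kV ltV kW ltW k (d - k)) \<and> (\<forall>k>d. m k = (\<lambda>_. 0))}"

definition Phi :: "('v::finite \<Rightarrow> kind) \<Rightarrow> ('w::finite \<Rightarrow> kind) \<Rightarrow> nat
      \<Rightarrow> (nat \<Rightarrow> ('v + 'w) list \<Rightarrow> 'r::comm_ring_1) \<Rightarrow> (('v + 'w) list \<Rightarrow> 'r)" where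
  "Phi kV kW d m = (\<lambda>x. \<Sum>k\<le>d. star (sumkind kV kW) k d (m k) x)"

definition homog :: "('b \<Rightarrow> kind) \<Rightarrow> bool \<Rightarrow> ('b list \<Rightarrow> 'r::zero) \<Rightarrow> bool" where
  "homog kd p t \<longleftrightarrow> (\<forall>bs. t bs \<noteq> 0 \<longrightarrow> odd (length (filter (\<lambda>b. kd b = KOdd) bs)) = p)"

end

theory Submission
  imports Defs "HOL-Library.Multiset"
begin


lemma permact_eq: "permact = permute_list"
  by (auto simp: permact_def permute_list_def fun_eq_iff)

lemma orbit_rel_mset: "orbit_rel c b \<longleftrightarrow> mset c = mset b"
proof
  assume "orbit_rel c b" then show "mset c = mset b"
    by (auto simp: orbit_rel_def permact_eq)
next
  assume "mset c = mset b"
  then obtain p where "p permutes {..<length b}" "permute_list p b = c"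
    by (rule mset_eq_permutation)
  then show "orbit_rel c b" by (auto simp: orbit_rel_def permact_eq)
qed

lemma mult_in_count: "mult_in bs b = count (mset bs) b"
  by (simp add: mult_in_def count_mset count_list_eq_length_filter length_filter_conv_card eq_commute)

definition dodd :: "('b \<Rightarrow> kind) \<Rightarrow> 'b list \<Rightarrow> bool" where
  "dodd kd xs \<longleftrightarrow> (\<forall>x. kd x = KOdd \<longrightarrow> count (mset xs) x \<le> 1)"

lemma Seq_dodd: "Seq kd d = {xs. length xs = d \<and> dodd kd xs}"
proof -
  have "(\<forall>k l. k < length xs \<longrightarrow> l < length xs \<longrightarrow> k \<noteq> l \<longrightarrow> xs!k = xs!l \<longrightarrow> kd (xs!k) \<noteq> KOdd)
     \<longleftrightarrow> dodd kd xs" for xs :: "'a list"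
  proof -
    have c: "count (mset xs) x = card {i. i < length xs \<and> xs!i = x}" for x
      by (simp add: count_mset count_list_eq_length_filter length_filter_conv_card eq_commute)
    show ?thesis unfolding dodd_def c card_le_Suc0_iff_eq[OF finite_subset[of _ "{..<length xs}"], simplified]
      by (auto simp: card_le_Suc0_iff_eq)
  qed
  then show ?thesis by (auto simp: Seq_def)
qed

lemma dodd_mset: "mset xs = mset ys \<Longrightarrow> dodd kd xs = dodd kd ys"
  by (simp add: dodd_def)

lemma finite_len: "finite {bs :: ('b::finite) list. length bs = d}"
  using finite_lists_length_eq[of "UNIV :: 'b set" d] by simp

lemma permact_nth: "\<sigma> permutes {..<length bs} \<Longrightarrow> i < length bs \<Longrightarrow> permact \<sigma> bs ! i = bs ! \<sigma> i"
  by (simp add: permact_def)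

lemma permact_length[simp]: "length (permact \<sigma> bs) = length bs"
  by (simp add: permact_def)

lemma permact_inv_cancel:
  assumes "\<sigma> permutes {..<length c}"
  shows "permact \<sigma> (permact (inv \<sigma>) c) = c"
proof -
  have "inv \<sigma> permutes {..<length c}" using assms by (rule permutes_inv)
  moreover have "\<forall>i<length c. \<sigma> i < length c" using assms permutes_in_image by fastforce
  ultimately show ?thesis using assms
    by (auto simp: permact_def permutes_inverses intro!: nth_equalityI)
qed

lemma permact_cancel_inv:
  assumes "\<sigma> permutes {..<length c}"
  shows "permact (inv \<sigma>) (permact \<sigma> c) = c"
proof -
  have "inv \<sigma> permutes {..<length c}" using assms by (rule permutes_inv)
  then have "\<forall>i<length c. inv \<sigma> i < length c" using permutes_in_image by fastforce
  then show ?thesis using assms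
    by (auto simp: permact_def permutes_inverses intro!: nth_equalityI)
qed

lemma mset_permact: "\<sigma> permutes {..<length bs} \<Longrightarrow> mset (permact \<sigma> bs) = mset bs"
  by (simp add: permact_eq)

lemma act_eq:
  fixes kd :: "'b::finite \<Rightarrow> kind"
  assumes "\<sigma> permutes {..<d}"
  shows "act kd d \<sigma> f c = (if length c = d then
     (-1) ^ sgn_exp kd \<sigma> (permact (inv \<sigma>) c) * f (permact (inv \<sigma>) c) else 0)"
proof (cases "length c = d")
  case True
  have "act kd d \<sigma> f c = (\<Sum>bs\<in>{bs. length bs = d}.
       if bs = permact (inv \<sigma>) c then (-1) ^ sgn_exp kd \<sigma> bs * f bs else 0)"
    unfolding act_def
  proof (rule sum.cong[OF refl])
    fix bs assume "bs \<in> {bs :: 'b list. length bs = d}"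
    then have "c = permact \<sigma> bs \<longleftrightarrow> bs = permact (inv \<sigma>) c"
      using True assms permact_inv_cancel[of \<sigma> c] permact_cancel_inv[of \<sigma> bs] by auto
    then show "(if c = permact \<sigma> bs then (-1) ^ sgn_exp kd \<sigma> bs * f bs else 0) =
       (if bs = permact (inv \<sigma>) c then (-1) ^ sgn_exp kd \<sigma> bs * f bs else 0)" by simp
  qed
  also have "\<dots> = (-1) ^ sgn_exp kd \<sigma> (permact (inv \<sigma>) c) * f (permact (inv \<sigma>) c)"
    using True by (simp add: sum.delta' finite_len)
  finally show ?thesis using True by simp
next
  case False
  then show ?thesis by (auto simp: act_def intro!: sum.neutral)
qed



lemma dodd_nth: "dodd kd xs \<Longrightarrow> k < length xs \<Longrightarrow> l < length xs \<Longrightarrow> k \<noteq> l \<Longrightarrow> kd (xs!k) = KOdd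
   \<Longrightarrow> xs!k \<noteq> xs!l"
  using Seq_dodd[of kd "length xs"] unfolding Seq_def by blast

lemma st_asym: "strict_total lt \<Longrightarrow> lt x y \<Longrightarrow> \<not> lt y x"
  unfolding strict_total_def by blast

lemma st_tot: "strict_total lt \<Longrightarrow> x \<noteq> y \<Longrightarrow> lt x y \<or> lt y x"
  unfolding strict_total_def by blast

lemma L1:
  fixes kd :: "'b \<Rightarrow> kind"
  assumes st: "strict_total lt" and perm: "\<sigma> permutes {..<length bs}" and dd: "dodd kd bs"
  shows "((-1::'r::ring_1) ^ (inv_odd kd lt bs + inv_odd kd lt (permact \<sigma> bs))) = (-1) ^ sgn_exp kd \<sigma> bs"
proof -
  define n where "n = length bs"
  define c where "c = permact \<sigma> bs"
  define s where "s = inv \<sigma>"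
  have pn: "\<sigma> permutes {..<n}" using perm n_def by simp
  have sp: "s permutes {..<n}" unfolding s_def using pn by (rule permutes_inv)
  have sig_lt: "i < n \<Longrightarrow> \<sigma> i < n" for i using pn permutes_in_image by fastforce
  have s_lt: "i < n \<Longrightarrow> s i < n" for i using sp permutes_in_image by fastforce
  have s_sig: "s (\<sigma> i) = i" for i unfolding s_def using pn permutes_inverses(2) by fastforce
  have sig_s: "\<sigma> (s i) = i" for i unfolding s_def using pn permutes_inverses(1) by fastforce
  have s_inj: "s k = s l \<Longrightarrow> k = l" for k l using sig_s by metis
  have s_ne: "k \<noteq> l \<Longrightarrow> s k < s l \<or> s l < s k" for k l using s_inj by (meson linorder_neqE_nat)
  have cn: "i < n \<Longrightarrow> c ! i = bs ! \<sigma> i" for i unfolding c_def n_def using perm permact_nth n_def by auto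
  have lc: "length c = n" unfolding c_def n_def by simp
  define Od where "Od k \<longleftrightarrow> kd (bs!k) = KOdd" for k
  define D where "D = {(k,l). k<n \<and> l<n \<and> k\<noteq>l \<and> Od k \<and> Od l \<and> lt (bs!l) (bs!k)}"
  have finD: "finite D" by (rule finite_subset[of _ "{..<n} \<times> {..<n}"]) (auto simp: D_def)
  define T1 where "T1 = {(k,l)\<in>D. k<l \<and> s k < s l}"
  define T2 where "T2 = {(k,l)\<in>D. k<l \<and> s l < s k}"
  define T3 where "T3 = {(k,l)\<in>D. l<k \<and> s k < s l}"
  have fin: "finite T1" "finite T2" "finite T3"
    unfolding T1_def T2_def T3_def by (auto intro: finite_subset[OF _ finD])
  have E1: "inv_odd kd lt c = card T1 + card T3"
  proof -
    define IC where "IC = {(i,j). i < j \<and> j < n \<and> kd (c!i) = KOdd \<and> kd (c!j) = KOdd \<and> lt (c!j) (c!i)}"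
    have "inv_odd kd lt c = card IC" unfolding inv_odd_def IC_def lc ..
    also have "IC = (\<lambda>(i,j). (s i, s j)) ` (T1 \<union> T3)"
    proof (rule set_eqI, rule iffI)
      fix x assume "x \<in> IC"
      then obtain i j where x: "x = (i,j)" "i < j" "j < n" "kd (c!i) = KOdd" "kd (c!j) = KOdd" "lt (c!j) (c!i)"
        unfolding IC_def by blast
      have ne: "\<sigma> i \<noteq> \<sigma> j" using x(2) s_sig[of i] s_sig[of j] by auto
      have "(\<sigma> i, \<sigma> j) \<in> T1 \<union> T3"
        using ne x cn[of i] cn[of j] sig_lt[of i] sig_lt[of j] s_sig[of i] s_sig[of j]
        by (auto simp: T1_def T3_def D_def Od_def)
      moreover have "x = (s (\<sigma> i), s (\<sigma> j))" using x s_sig by simp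
      ultimately show "x \<in> (\<lambda>(i,j). (s i, s j)) ` (T1 \<union> T3)" by force
    next
      fix x assume "x \<in> (\<lambda>(i,j). (s i, s j)) ` (T1 \<union> T3)"
      then obtain k l where x: "x = (s k, s l)" "(k,l) \<in> T1 \<union> T3" by auto
      then show "x \<in> IC"
        using cn[of "s k"] cn[of "s l"] s_lt[of k] s_lt[of l] sig_s[of k] sig_s[of l]
        by (auto simp: T1_def T3_def D_def Od_def IC_def)
    qed
    also have "card \<dots> = card (T1 \<union> T3)"
      by (rule card_image) (auto simp: inj_on_def dest: s_inj)
    also have "\<dots> = card T1 + card T3"
      by (rule card_Un_disjoint) (use fin in \<open>auto simp: T1_def T3_def\<close>)
    finally show ?thesis .
  qed
  have E2: "inv_odd kd lt bs = card T1 + card T2"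
  proof -
    have "inv_odd kd lt bs = card (T1 \<union> T2)"
      unfolding inv_odd_def n_def[symmetric]
      by (rule arg_cong[where f=card]) (auto simp: T1_def T2_def D_def Od_def, metis less_irrefl s_ne)
    also have "\<dots> = card T1 + card T2"
      by (rule card_Un_disjoint) (use fin in \<open>auto simp: T1_def T2_def\<close>)
    finally show ?thesis .
  qed
  have E3: "sgn_exp kd \<sigma> bs = card T2 + card T3"
  proof -
    have "sgn_exp kd \<sigma> bs = card (T2 \<union> (\<lambda>(k,l). (l,k)) ` T3)"
      unfolding sgn_exp_def n_def[symmetric] s_def[symmetric]
    proof (rule arg_cong[where f=card], rule set_eqI, rule iffI)
      fix x assume "x \<in> {(k, l). k < l \<and> l < n \<and> s l < s k \<and> kd (bs ! k) = KOdd \<and> kd (bs ! l) = KOdd}"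
      then obtain k l where x: "x = (k,l)" "k < l" "l < n" "s l < s k" "Od k" "Od l"
        by (auto simp: Od_def)
      have "bs!k \<noteq> bs!l" using dodd_nth[OF dd, of k l] x n_def Od_def by auto
      then have "lt (bs!l) (bs!k) \<or> lt (bs!k) (bs!l)" using st_tot[OF st] by blast
      then show "x \<in> T2 \<union> (\<lambda>(k,l). (l,k)) ` T3"
      proof
        assume "lt (bs!l) (bs!k)" then show ?thesis using x by (auto simp: T2_def D_def)
      next
        assume "lt (bs!k) (bs!l)"
        then have "(l,k) \<in> T3" using x by (auto simp: T3_def D_def)
        then show ?thesis using x by force
      qed
    next
      fix x assume "x \<in> T2 \<union> (\<lambda>(k,l). (l,k)) ` T3"
      then show "x \<in> {(k, l). k < l \<and> l < n \<and> s l < s k \<and> kd (bs ! k) = KOdd \<and> kd (bs ! l) = KOdd}"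
        by (auto simp: T2_def T3_def D_def Od_def)
    qed
    also have "\<dots> = card T2 + card ((\<lambda>(k,l). (l,k)) ` T3)"
      by (rule card_Un_disjoint) (use fin st_asym[OF st] in \<open>auto simp: T2_def T3_def D_def\<close>)
    also have "card ((\<lambda>(k,l). (l,k)) ` T3) = card T3"
      by (rule card_image) (auto simp: inj_on_def)
    finally show ?thesis .
  qed
  have "inv_odd kd lt bs + inv_odd kd lt (permact \<sigma> bs) = 2 * card T1 + sgn_exp kd \<sigma> bs"
    using E1 E2 E3 c_def by simp
  then show ?thesis by (simp add: power_add power_mult)
qed



definition sigS :: "nat set \<Rightarrow> nat \<Rightarrow> nat \<Rightarrow> nat \<Rightarrow> nat" where
  "sigS S k d x = (if x < d then (if x \<in> S then card {s\<in>S. s<x} else k + card {s. s<d \<and> s\<notin>S \<and> s<x}) else x)"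

definition Pc :: "nat set \<Rightarrow> nat \<Rightarrow> nat \<Rightarrow> (nat \<Rightarrow> nat) \<Rightarrow> bool" where
  "Pc S k d \<sigma> \<longleftrightarrow> (\<forall>i<d. \<sigma> i < k \<longleftrightarrow> i \<in> S)"

definition Inv :: "nat \<Rightarrow> (nat \<Rightarrow> nat) \<Rightarrow> (nat \<times> nat) set" where
  "Inv d \<sigma> = {(i,j). i<j \<and> j<d \<and> \<sigma> i > \<sigma> j}"

definition Xs :: "nat set \<Rightarrow> nat \<Rightarrow> (nat \<times> nat) set" where
  "Xs S d = {(i,j). i<j \<and> j<d \<and> i \<notin> S \<and> j \<in> S}"

lemma ninv_Inv: "ninv d \<sigma> = card (Inv d \<sigma>)"
  by (simp add: ninv_def Inv_def)

lemma finite_Inv: "finite (Inv d \<sigma>)"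
  by (rule finite_subset[of _ "{..<d} \<times> {..<d}"]) (auto simp: Inv_def)

context
  fixes S :: "nat set" and k d :: nat
  assumes Sd: "S \<subseteq> {..<d}" and cS: "card S = k"
begin

lemma kd_le: "k \<le> d"
  using card_mono[OF _ Sd] cS by simp

lemma finS: "finite S" using Sd finite_subset by blast

lemma sigS_S: "x \<in> S \<Longrightarrow> sigS S k d x < k"
proof -
  assume x: "x \<in> S"
  then have "x < d" using Sd by auto
  have "{s\<in>S. s<x} \<subset> S" using x by auto
  then have "card {s\<in>S. s<x} < card S" using finS by (rule psubset_card_mono[rotated])
  then show ?thesis using x \<open>x<d\<close> cS by (simp add: sigS_def)
qed

lemma sigS_nS: "x < d \<Longrightarrow> x \<notin> S \<Longrightarrow> k \<le> sigS S k d x \<and> sigS S k d x < d"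
proof -
  assume x: "x < d" "x \<notin> S"
  have "{s. s<d \<and> s\<notin>S \<and> s<x} \<subset> {..<d} - S" using x by auto
  then have "card {s. s<d \<and> s\<notin>S \<and> s<x} < card ({..<d} - S)" by (rule psubset_card_mono[rotated]) simp
  also have "card ({..<d} - S) = d - k" using Sd cS finS by (simp add: card_Diff_subset)
  finally show ?thesis using x kd_le by (simp add: sigS_def)
qed

lemma sigS_mono_S: "x \<in> S \<Longrightarrow> y \<in> S \<Longrightarrow> x < y \<Longrightarrow> sigS S k d x < sigS S k d y"
proof -
  assume xy: "x \<in> S" "y \<in> S" "x < y"
  then have "x < d" "y < d" using Sd by auto
  have "{s\<in>S. s<x} \<subset> {s\<in>S. s<y}" using xy by auto
  then have "card {s\<in>S. s<x} < card {s\<in>S. s<y}" by (rule psubset_card_mono[rotated]) (use finS in auto)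
  then show ?thesis using xy \<open>x<d\<close> \<open>y<d\<close> by (simp add: sigS_def)
qed

lemma sigS_mono_nS: "x \<notin> S \<Longrightarrow> y \<notin> S \<Longrightarrow> x < y \<Longrightarrow> y < d \<Longrightarrow> sigS S k d x < sigS S k d y"
proof -
  assume xy: "x \<notin> S" "y \<notin> S" "x < y" "y < d"
  have A: "{s. s<d \<and> s\<notin>S \<and> s<x} \<subseteq> {s. s<d \<and> s\<notin>S \<and> s<y}" using xy by auto
  have B: "x \<in> {s. s<d \<and> s\<notin>S \<and> s<y}" "x \<notin> {s. s<d \<and> s\<notin>S \<and> s<x}" using xy by auto
  from A B have "{s. s<d \<and> s\<notin>S \<and> s<x} \<subset> {s. s<d \<and> s\<notin>S \<and> s<y}" by blast
  then have "card {s. s<d \<and> s\<notin>S \<and> s<x} < card {s. s<d \<and> s\<notin>S \<and> s<y}"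
    by (rule psubset_card_mono[rotated]) (rule finite_subset[of _ "{..<d}"], auto)
  then show ?thesis using xy by (simp add: sigS_def)
qed

lemma sigS_lt: "x < d \<Longrightarrow> sigS S k d x < d"
  using sigS_S sigS_nS kd_le by (cases "x \<in> S") force+

lemma sigS_inj: "inj_on (sigS S k d) {..<d}"
proof (rule inj_onI, rule ccontr)
  fix x y assume x: "x \<in> {..<d}" and y: "y \<in> {..<d}" and eq: "sigS S k d x = sigS S k d y" and ne: "x \<noteq> y"
  have *: "sigS S k d a \<noteq> sigS S k d b" if "a < b" "b < d" for a b
  proof -
    have "a < d" using that by simp
    then show ?thesis
      using that sigS_S[of a] sigS_S[of b] sigS_nS[of a] sigS_nS[of b] sigS_mono_S[of a b] sigS_mono_nS[of a b]
      by (cases "a \<in> S"; cases "b \<in> S") force+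
  qed
  show False using ne eq x y *[of x y] *[of y x] by (auto simp: neq_iff)
qed

lemma sigS_permutes: "sigS S k d permutes {..<d}"
proof (rule bij_imp_permutes)
  have "sigS S k d ` {..<d} \<subseteq> {..<d}" using sigS_lt by auto
  then have "sigS S k d ` {..<d} = {..<d}" using sigS_inj by (intro endo_inj_surj) auto
  then show "bij_betw (sigS S k d) {..<d} {..<d}" using sigS_inj by (simp add: bij_betw_def)
qed (simp add: sigS_def)

lemma sigS_P: "Pc S k d (sigS S k d)"
  unfolding Pc_def using sigS_S sigS_nS by (meson not_le)

lemma Xs_sub: "Pc S k d \<sigma> \<Longrightarrow> Xs S d \<subseteq> Inv d \<sigma>"
  unfolding Pc_def Xs_def Inv_def
  by clarify (metis dual_order.strict_trans2 less_trans not_le)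

lemma Inv_sigS: "Inv d (sigS S k d) = Xs S d"
proof
  show "Xs S d \<subseteq> Inv d (sigS S k d)" by (rule Xs_sub[OF sigS_P])
  show "Inv d (sigS S k d) \<subseteq> Xs S d"
  proof clarify
    fix i j assume "(i,j) \<in> Inv d (sigS S k d)"
    then have ij: "i < j" "j < d" "sigS S k d j < sigS S k d i" by (auto simp: Inv_def)
    show "(i,j) \<in> Xs S d"
      using ij sigS_S[of i] sigS_nS[of j] sigS_mono_S[of i j] sigS_mono_nS[of i j]
      by (cases "i \<in> S"; cases "j \<in> S") (auto simp: Xs_def)
  qed
qed

lemma finite_Xs: "finite (Xs S d)"
  by (rule finite_subset[of _ "{..<d} \<times> {..<d}"]) (auto simp: Xs_def)

lemma sigS_minreps: "sigS S k d \<in> minreps k d"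
  unfolding minreps_def
proof (intro CollectI conjI allI impI)
  show "sigS S k d permutes {..<d}" by (rule sigS_permutes)
  fix \<tau> assume t: "\<tau> permutes {..<d} \<and> \<tau> ` {..<k} = {..<k}"
  have tk: "y < d \<Longrightarrow> \<tau> y < k \<longleftrightarrow> y < k" for y
  proof
    assume "y < d" "\<tau> y < k"
    then obtain y' where "y' < k" "\<tau> y' = \<tau> y" using t by (metis imageE lessThan_iff rev_image_eqI)
    then show "y < k" using t permutes_inj by (metis injD)
  next
    assume "y < k" then show "\<tau> y < k" using t by auto
  qed
  have "Pc S k d (\<tau> \<circ> sigS S k d)"
    using sigS_P tk sigS_lt by (simp add: Pc_def)
  then have "Xs S d \<subseteq> Inv d (\<tau> \<circ> sigS S k d)" by (rule Xs_sub)
  then show "ninv d (sigS S k d) \<le> ninv d (\<tau> \<circ> sigS S k d)"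
    by (simp add: ninv_Inv Inv_sigS card_mono finite_Inv)
qed

lemma minreps_unique:
  assumes m: "\<sigma> \<in> minreps k d" and P: "Pc S k d \<sigma>"
  shows "\<sigma> = sigS S k d"
proof -
  have sp: "\<sigma> permutes {..<d}" using m by (simp add: minreps_def)
  define \<tau> where "\<tau> = sigS S k d \<circ> inv \<sigma>"
  have tp: "\<tau> permutes {..<d}" unfolding \<tau>_def
    by (rule permutes_compose[OF permutes_inv[OF sp] sigS_permutes])
  have isig: "inv \<sigma> y < d" if "y < d" for y using permutes_inv[OF sp] that permutes_in_image by fastforce
  have sig_isig: "\<sigma> (inv \<sigma> y) = y" for y using sp permutes_inverses(1) by fastforce
  have isig_sig: "inv \<sigma> (\<sigma> y) = y" for y using sp permutes_inverses(2) by fastforce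
  have sig_lt: "y < d \<Longrightarrow> \<sigma> y < d" for y using sp permutes_in_image by fastforce
  have "\<tau> ` {..<k} \<subseteq> {..<k}"
  proof clarify
    fix y assume "y < k"
    then have "y < d" using kd_le by simp
    then have "inv \<sigma> y \<in> S" using P isig[of y] sig_isig[of y] \<open>y<k\<close> unfolding Pc_def by metis
    then show "\<tau> y < k" by (simp add: \<tau>_def sigS_S)
  qed
  moreover have "inj_on \<tau> {..<k}" using tp permutes_inj_on by blast
  ultimately have "\<tau> ` {..<k} = {..<k}" by (intro endo_inj_surj) auto
  then have "ninv d \<sigma> \<le> ninv d (\<tau> \<circ> \<sigma>)" using m tp by (auto simp: minreps_def)
  also have "\<tau> \<circ> \<sigma> = sigS S k d" by (simp add: \<tau>_def fun_eq_iff isig_sig)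
  finally have "card (Inv d \<sigma>) \<le> card (Xs S d)" by (simp add: ninv_Inv Inv_sigS)
  with Xs_sub[OF P] have IX: "Inv d \<sigma> = Xs S d"
    by (intro card_seteq[symmetric]) (auto simp: finite_Inv)
  have incr: "\<sigma> i < \<sigma> j" if "i < j" "j < d" "\<not> (i \<notin> S \<and> j \<in> S)" for i j
  proof -
    have "(i,j) \<notin> Inv d \<sigma>" using IX that by (auto simp: Xs_def)
    then have "\<sigma> i \<le> \<sigma> j" using that by (auto simp: Inv_def)
    moreover have "\<sigma> i \<noteq> \<sigma> j" using that isig_sig by (metis less_irrefl)
    ultimately show ?thesis by simp
  qed
  show ?thesis
  proof
    fix x
    show "\<sigma> x = sigS S k d x"
    proof (cases "x < d")
      case False
      then show ?thesis using sp by (simp add: sigS_def permutes_def)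
    next
      case xd: True
      show ?thesis
      proof (cases "x \<in> S")
        case True
        then have sxk: "\<sigma> x < k" using P xd by (simp add: Pc_def)
        have "{..<\<sigma> x} = \<sigma> ` {s\<in>S. s<x}"
        proof (rule set_eqI, rule iffI)
          fix y assume y: "y \<in> {..<\<sigma> x}"
          then have yk: "y < k" using sxk by simp
          then have yd: "y < d" using kd_le by simp
          define s where "s = inv \<sigma> y"
          have ss: "\<sigma> s = y" "s < d" using sig_isig isig yd by (auto simp: s_def)
          then have "s \<in> S" using P yk by (auto simp: Pc_def)
          moreover have "s < x"
          proof (rule ccontr)
            assume "\<not> s < x"
            moreover have "s \<noteq> x" using ss y by auto
            ultimately have "x < s" by simp
            then have "\<sigma> x < \<sigma> s" using incr[of x s] ss \<open>s \<in> S\<close> True by auto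
            then show False using ss y by simp
          qed
          ultimately show "y \<in> \<sigma> ` {s\<in>S. s<x}" using ss by auto
        next
          fix y assume "y \<in> \<sigma> ` {s\<in>S. s<x}"
          then obtain s where "s \<in> S" "s < x" "y = \<sigma> s" by auto
          then show "y \<in> {..<\<sigma> x}" using incr[of s x] xd True by auto
        qed
        then have "card {..<\<sigma> x} = card (\<sigma> ` {s\<in>S. s<x})" by simp
        also have "\<dots> = card {s\<in>S. s<x}"
          by (rule card_image, rule permutes_inj_on[OF sp])
        finally show ?thesis using xd True by (simp add: sigS_def)
      next
        case False
        then have sxk: "k \<le> \<sigma> x" using P xd by (auto simp: Pc_def)
        have "{k..<\<sigma> x} = \<sigma> ` {s. s<d \<and> s\<notin>S \<and> s<x}"
        proof (rule set_eqI, rule iffI)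
          fix y assume y: "y \<in> {k..<\<sigma> x}"
          then have yd: "y < d" using sig_lt[OF xd] by simp
          define s where "s = inv \<sigma> y"
          have ss: "\<sigma> s = y" "s < d" using sig_isig isig yd by (auto simp: s_def)
          then have "s \<notin> S" using P y by (auto simp: Pc_def)
          moreover have "s < x"
          proof (rule ccontr)
            assume "\<not> s < x"
            moreover have "s \<noteq> x" using ss y by auto
            ultimately have "x < s" by simp
            then have "\<sigma> x < \<sigma> s" using incr[of x s] ss \<open>s \<notin> S\<close> False by auto
            then show False using ss y by simp
          qed
          ultimately show "y \<in> \<sigma> ` {s. s<d \<and> s\<notin>S \<and> s<x}" using ss by auto
        next
          fix y assume "y \<in> \<sigma> ` {s. s<d \<and> s\<notin>S \<and> s<x}"
          then obtain s where s: "s < d" "s \<notin> S" "s < x" "y = \<sigma> s" by auto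
          then have "k \<le> y" using P by (auto simp: Pc_def)
          then show "y \<in> {k..<\<sigma> x}" using incr[of s x] xd False s by auto
        qed
        then have "card {k..<\<sigma> x} = card (\<sigma> ` {s. s<d \<and> s\<notin>S \<and> s<x})" by simp
        also have "\<dots> = card {s. s<d \<and> s\<notin>S \<and> s<x}"
          by (rule card_image, rule permutes_inj_on[OF sp])
        finally show ?thesis using xd False sxk by (simp add: sigS_def)
      qed
    qed
  qed
qed

lemma minreps_P_eq: "{\<sigma>\<in>minreps k d. Pc S k d \<sigma>} = {sigS S k d}"
  using minreps_unique sigS_minreps sigS_P by blast

end

lemma finite_minreps: "finite (minreps k d)"
  by (rule finite_subset[OF _ finite_permutations[of "{..<d}"]]) (auto simp: minreps_def)

lemma minreps_perm: "\<sigma> \<in> minreps k d \<Longrightarrow> \<sigma> permutes {..<d}"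
  by (simp add: minreps_def)

lemma id_minreps: "id \<in> minreps k d"
proof -
  have "{(i, j). i < j \<and> j < (d::nat) \<and> id j < id i} = {}" by auto
  then have "ninv d id = 0" unfolding ninv_def by (simp only: card.empty)
  then show ?thesis by (simp add: minreps_def)
qed

lemma sum_minreps_P:
  assumes "S \<subseteq> {..<d}" "card S = k"
  shows "(\<Sum>\<sigma>\<in>minreps k d. if Pc S k d \<sigma> then g \<sigma> else 0) = g (sigS S k d)"
proof -
  have "(\<Sum>\<sigma>\<in>minreps k d. if Pc S k d \<sigma> then g \<sigma> else 0) = (\<Sum>\<sigma>\<in>{\<sigma>\<in>minreps k d. Pc S k d \<sigma>}. g \<sigma>)"
    by (simp add: sum.inter_filter finite_minreps)
  also have "\<dots> = g (sigS S k d)" using minreps_P_eq[OF assms] by simp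
  finally show ?thesis .
qed



lemma xvec_alt: "xvec kd lt bs c = (if mset c = mset bs then (-1) ^ (inv_odd kd lt bs + inv_odd kd lt c) else 0)"
  by (simp add: xvec_def orbit_rel_mset)

lemma cfact_mset: "mset a = mset b \<Longrightarrow> cfact kd a = cfact kd b"
  by (simp add: cfact_def mult_in_count)

lemma yvec_alt: "yvec kd lt bs c = (if mset c = mset bs then of_nat (cfact kd bs) * (-1) ^ (inv_odd kd lt bs + inv_odd kd lt c) else 0)"
  by (simp add: yvec_def xvec_alt)

lemma yvec_nz: "yvec kd lt bs c \<noteq> 0 \<Longrightarrow> mset c = mset bs"
  by (simp add: yvec_alt split: if_splits)

lemma neg1_sq: "((-1::'r::ring_1) ^ n) * (-1) ^ n = 1"
proof -
  have "((-1::'r) ^ n) * (-1) ^ n = (-1) ^ (n + n)" by (simp add: power_add)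
  also have "\<dots> = 1" by (rule neg_one_even_power) simp
  finally show ?thesis .
qed

lemma yvec_orbit:
  assumes "mset B = mset B'"
  shows "yvec kd lt B = (\<lambda>c. (-1) ^ (inv_odd kd lt B + inv_odd kd lt B') * yvec kd lt B' c :: 'r::comm_ring_1)"
proof
  fix c
  show "yvec kd lt B c = (-1) ^ (inv_odd kd lt B + inv_odd kd lt B') * (yvec kd lt B' c :: 'r)"
  proof (cases "mset c = mset B")
    case True
    have E: "(-1::'r) ^ (inv_odd kd lt B + inv_odd kd lt c) =
       (-1) ^ (inv_odd kd lt B + inv_odd kd lt B') * ((-1) ^ (inv_odd kd lt B' + inv_odd kd lt c))"
      using neg1_sq[of "inv_odd kd lt B'", where 'r='r] by (simp add: power_add algebra_simps)
    have Y1: "yvec kd lt B c = (of_nat (cfact kd B') * (-1::'r) ^ (inv_odd kd lt B + inv_odd kd lt c))"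
      using True cfact_mset[OF assms, of kd] by (simp add: yvec_alt)
    have Y2: "yvec kd lt B' c = (of_nat (cfact kd B') * (-1::'r) ^ (inv_odd kd lt B' + inv_odd kd lt c))"
      using True assms by (simp add: yvec_alt)
    show ?thesis unfolding Y1 Y2 E by (rule mult.left_commute)
  next
    case False then show ?thesis using assms by (simp add: yvec_alt)
  qed
qed

lemma OC:
  assumes "dodd kd xs" "mset xs' = mset xs" "strict_total lt1" "strict_total lt2"
  shows "((-1::'r::ring_1) ^ (inv_odd kd lt1 xs + inv_odd kd lt1 xs')) = (-1) ^ (inv_odd kd lt2 xs + inv_odd kd lt2 xs')"
proof -
  obtain p where p: "p permutes {..<length xs}" "permute_list p xs = xs'"
    using mset_eq_permutation[OF assms(2)] by blast
  then have "xs' = permact p xs" by (simp add: permact_eq)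
  then show ?thesis using L1[OF assms(3) p(1) assms(1), where 'r='r] L1[OF assms(4) p(1) assms(1), where 'r='r] by simp
qed

lemma yvec_inv:
  fixes kd :: "'b::finite \<Rightarrow> kind"
  assumes st: "strict_total lt" and dB: "dodd kd B" and sp: "\<sigma> permutes {..<length c}"
  shows "(-1) ^ sgn_exp kd \<sigma> (permact (inv \<sigma>) c) * yvec kd lt B (permact (inv \<sigma>) c) = (yvec kd lt B c :: 'r::comm_ring_1)"
proof -
  define c0 where "c0 = permact (inv \<sigma>) c"
  have ip: "inv \<sigma> permutes {..<length c}" using sp by (rule permutes_inv)
  have mc: "mset c0 = mset c" unfolding c0_def using mset_permact[of "inv \<sigma>" c] ip by simp
  have lc: "length c0 = length c" by (simp add: c0_def)
  have pc: "permact \<sigma> c0 = c" unfolding c0_def by (rule permact_inv_cancel[OF sp])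
  show ?thesis
  proof (cases "mset c = mset B")
    case True
    have d0: "dodd kd c0" using dB mc True by (simp add: dodd_def)
    have L: "((-1::'r) ^ (inv_odd kd lt c0 + inv_odd kd lt c)) = (-1) ^ sgn_exp kd \<sigma> c0"
      using L1[OF st _ d0, of \<sigma>] sp lc pc by simp
    have "(-1::'r) ^ sgn_exp kd \<sigma> c0 * (-1) ^ (inv_odd kd lt B + inv_odd kd lt c0)
        = (-1) ^ (inv_odd kd lt B + inv_odd kd lt c)"
      unfolding L[symmetric] using neg1_sq[of "inv_odd kd lt c0", where 'r='r]
      by (simp add: power_add algebra_simps)
    then show ?thesis using True mc unfolding c0_def[symmetric] yvec_alt
      by (simp add: algebra_simps)
  next
    case False then show ?thesis using mc by (simp add: yvec_alt c0_def)
  qed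
qed

lemma mset_Inl_part: "mset a = image_mset projl (filter_mset isl (mset (map Inl a @ map Inr b)))"
proof -
  have "a = map projl (filter isl (map Inl a @ map Inr b))" by (induct a) (auto simp: filter_map o_def)
  then have "mset a = mset (map projl (filter isl (map Inl a @ map Inr b)))" by simp
  then show ?thesis by (simp only: mset_map mset_filter)
qed

lemma mset_Inr_part: "mset b = image_mset projr (filter_mset (\<lambda>x. \<not> isl x) (mset (map Inl a @ map Inr b)))"
proof -
  have "b = map projr (filter (\<lambda>x. \<not> isl x) (map Inl a @ map Inr b))" by (induct a) (auto simp: filter_map o_def)
  then have "mset b = mset (map projr (filter (\<lambda>x. \<not> isl x) (map Inl a @ map Inr b)))" by simp
  then show ?thesis by (simp only: mset_map mset_filter)
qed

lemma mset_split: "mset (map Inl a @ map Inr b) = mset (map Inl a' @ map Inr b') \<longleftrightarrow> mset a = mset a' \<and> mset b = mset b'"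
proof
  assume "mset (map Inl a @ map Inr b) = mset (map Inl a' @ map Inr b')"
  then show "mset a = mset a' \<and> mset b = mset b'"
    by (metis mset_Inl_part mset_Inr_part)
qed simp

lemma count_split: "count (mset (map Inl a @ map Inr b)) (Inl x) = count (mset a) x"
    "count (mset (map Inl a @ map Inr b)) (Inr y) = count (mset b) y"
  by (simp_all only: count_mset count_list_eq_length_filter) (simp_all add: filter_map o_def)



lemma count_img_sum1[simp]: "count (image_mset Inl A) (Inl x) = count A x"
  by (induct A) auto
lemma count_img_sum2[simp]: "count (image_mset Inr B) (Inr y) = count B y"
  by (induct B) auto
lemma count_img_sum3[simp]: "count (image_mset Inr B) (Inl x) = 0"
  by (induct B) auto
lemma count_img_sum4[simp]: "count (image_mset Inl A) (Inr y) = 0"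
  by (induct A) auto

lemma cfact_split:
  fixes kV :: "'v::finite \<Rightarrow> kind" and kW :: "'w::finite \<Rightarrow> kind"
  shows "cfact (sumkind kV kW) (map Inl a @ map Inr b) = cfact kV a * cfact kW b"
proof -
  have U: "{x. sumkind kV kW x = KC} = Inl ` {v. kV v = KC} \<union> Inr ` {w. kW w = KC}"
    by (auto simp: sumkind_def image_iff split: sum.splits) (metis sum.exhaust_sel old.sum.simps(5,6))+
  show ?thesis
    unfolding cfact_def U
    by (subst prod.union_disjoint) (auto simp: prod.reindex mult_in_count count_split)
qed

definition cross :: "('v \<Rightarrow> kind) \<Rightarrow> ('w \<Rightarrow> kind) \<Rightarrow> ('v + 'w \<Rightarrow> 'v + 'w \<Rightarrow> bool) \<Rightarrow> 'v list \<Rightarrow> 'w list \<Rightarrow> nat" where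
  "cross kV kW ltS a b = card {(i,j). i < length a \<and> j < length b \<and> kV (a!i) = KOdd \<and> kW (b!j) = KOdd
      \<and> ltS (Inr (b!j)) (Inl (a!i))}"

lemma DEC:
  "inv_odd (sumkind kV kW) ltS (map Inl a @ map Inr b) =
     inv_odd kV (\<lambda>x y. ltS (Inl x) (Inl y)) a + inv_odd kW (\<lambda>x y. ltS (Inr x) (Inr y)) b + cross kV kW ltS a b"
proof -
  define n where "n = length a"
  define m where "m = length b"
  define L where "L = map Inl a @ map Inr b"
  have Ln: "L ! i = (if i < n then Inl (a!i) else Inr (b!(i-n)))" if "i < n + m" for i
    using that by (simp add: L_def nth_append n_def m_def)
  have lL: "length L = n + m" by (simp add: L_def n_def m_def)
  define IL where "IL = {(k,l). k<l \<and> l<length L \<and> sumkind kV kW (L!k) = KOdd \<and> sumkind kV kW (L!l) = KOdd \<and> ltS (L!l) (L!k)}"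
  define IA where "IA = {(k,l). k<l \<and> l<length a \<and> kV (a!k) = KOdd \<and> kV (a!l) = KOdd \<and> ltS (Inl (a!l)) (Inl (a!k))}"
  define IB where "IB = {(k,l). k<l \<and> l<length b \<and> kW (b!k) = KOdd \<and> kW (b!l) = KOdd \<and> ltS (Inr (b!l)) (Inr (b!k))}"
  define CS where "CS = {(i,j). i < length a \<and> j < length b \<and> kV (a!i) = KOdd \<and> kW (b!j) = KOdd
      \<and> ltS (Inr (b!j)) (Inl (a!i))}"
  have finA: "finite IA" by (rule finite_subset[of _ "{..<n}\<times>{..<n}"]) (auto simp: IA_def n_def)
  have finB: "finite IB" by (rule finite_subset[of _ "{..<m}\<times>{..<m}"]) (auto simp: IB_def m_def)
  have finC: "finite CS" by (rule finite_subset[of _ "{..<n}\<times>{..<m}"]) (auto simp: CS_def n_def m_def)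
  have "IL = IA \<union> ((\<lambda>(k,l). (k+n, l+n)) ` IB \<union> (\<lambda>(i,j). (i, j+n)) ` CS)"
  proof (rule set_eqI, rule iffI)
    fix x assume "x \<in> IL"
    then obtain k l where x: "x = (k,l)" "k<l" "l<n+m" "sumkind kV kW (L!k) = KOdd" "sumkind kV kW (L!l) = KOdd" "ltS (L!l) (L!k)"
      unfolding IL_def lL by blast
    show "x \<in> IA \<union> ((\<lambda>(k,l). (k+n, l+n)) ` IB \<union> (\<lambda>(i,j). (i, j+n)) ` CS)"
    proof (cases "l < n")
      case True then show ?thesis using x Ln[of k] Ln[of l] by (auto simp: IA_def sumkind_def n_def)
    next
      case ln: False
      show ?thesis
      proof (cases "k < n")
        case True
        then have "(k, l - n) \<in> CS" using x ln Ln[of k] Ln[of l] by (auto simp: CS_def sumkind_def n_def m_def)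
        moreover have "x = (k, l - n + n)" using x ln by simp
        ultimately show ?thesis by force
      next
        case False
        then have "(k - n, l - n) \<in> IB" using x ln Ln[of k] Ln[of l] by (auto simp: IB_def sumkind_def n_def m_def)
        moreover have "x = (k - n + n, l - n + n)" using x ln False by simp
        ultimately show ?thesis by force
      qed
    qed
  next
    fix x assume "x \<in> IA \<union> ((\<lambda>(k,l). (k+n, l+n)) ` IB \<union> (\<lambda>(i,j). (i, j+n)) ` CS)"
    then show "x \<in> IL"
    proof (elim UnE)
      assume "x \<in> IA" then show ?thesis using Ln by (auto simp: IA_def IL_def lL sumkind_def n_def)
    next
      assume "x \<in> (\<lambda>(k,l). (k+n, l+n)) ` IB" then show ?thesis using Ln by (auto simp: IB_def IL_def lL sumkind_def m_def)
    next
      assume "x \<in> (\<lambda>(i,j). (i, j+n)) ` CS" then show ?thesis using Ln by (auto simp: CS_def IL_def lL sumkind_def n_def m_def)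
    qed
  qed
  then have "card IL = card IA + card ((\<lambda>(k,l). (k+n, l+n)) ` IB \<union> (\<lambda>(i,j). (i, j+n)) ` CS)"
    using finA finB finC by (simp add: card_Un_disjoint[symmetric]) (rule card_Un_disjoint, auto simp: IA_def IB_def CS_def n_def)
  also have "card ((\<lambda>(k,l). (k+n, l+n)) ` IB \<union> (\<lambda>(i,j). (i, j+n)) ` CS) =
      card ((\<lambda>(k,l). (k+n, l+n)) ` IB) + card ((\<lambda>(i,j). (i, j+n)) ` CS)"
    using finB finC by (intro card_Un_disjoint) (auto simp: IB_def CS_def n_def)
  also have "card ((\<lambda>(k,l). (k+n, l+n)) ` IB) = card IB" by (rule card_image) (auto simp: inj_on_def)
  also have "card ((\<lambda>(i,j). (i, j+n)) ` CS) = card CS" by (rule card_image) (auto simp: inj_on_def)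
  finally show ?thesis
    by (simp add: inv_odd_def IL_def IA_def IB_def CS_def cross_def L_def)
qed

lemma cross_mset:
  assumes "mset a' = mset a" "mset b' = mset b"
  shows "cross kV kW ltS a' b' = cross kV kW ltS a b"
proof -
  obtain p where p: "p permutes {..<length a}" "permute_list p a = a'"
    using mset_eq_permutation[OF assms(1)] by blast
  obtain q where q: "q permutes {..<length b}" "permute_list q b = b'"
    using mset_eq_permutation[OF assms(2)] by blast
  have la: "length a' = length a" "length b' = length b" using p q by auto
  have pl: "i < length a \<Longrightarrow> p i < length a" for i using p(1) permutes_in_image by fastforce
  have ql: "i < length b \<Longrightarrow> q i < length b" for i using q(1) permutes_in_image by fastforce
  have an: "i < length a \<Longrightarrow> a' ! i = a ! p i" for i using p permute_list_nth by metis
  have bn: "i < length b \<Longrightarrow> b' ! i = b ! q i" for i using q permute_list_nth by metis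
  define CS where "CS a b = {(i,j). i < length a \<and> j < length b \<and> kV (a!i) = KOdd \<and> kW (b!j) = KOdd
      \<and> ltS (Inr (b!j)) (Inl (a!i))}" for a b
  have "(\<lambda>(i,j). (p i, q j)) ` CS a' b' = CS a b"
  proof (rule set_eqI, rule iffI)
    fix x assume "x \<in> (\<lambda>(i,j). (p i, q j)) ` CS a' b'"
    then show "x \<in> CS a b" using la an bn pl ql by (auto simp: CS_def)
  next
    fix x assume "x \<in> CS a b"
    then obtain i j where x: "x = (i,j)" "i < length a" "j < length b" "kV (a!i) = KOdd" "kW (b!j) = KOdd" "ltS (Inr (b!j)) (Inl (a!i))"
      by (auto simp: CS_def)
    have ip: "inv p i < length a" "p (inv p i) = i" using x p(1) permutes_inv[OF p(1)] permutes_in_image permutes_inverses(1) by fastforce+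
    have iq: "inv q j < length b" "q (inv q j) = j" using x q(1) permutes_inv[OF q(1)] permutes_in_image permutes_inverses(1) by fastforce+
    have "(inv p i, inv q j) \<in> CS a' b'" using x ip iq la an bn by (auto simp: CS_def)
    then show "x \<in> (\<lambda>(i,j). (p i, q j)) ` CS a' b'" using x ip iq by force
  qed
  moreover have "inj_on (\<lambda>(i,j). (p i, q j)) (CS a' b')"
    using permutes_inj[OF p(1)] permutes_inj[OF q(1)] by (auto simp: inj_on_def inj_def)
  ultimately have "card (CS a' b') = card (CS a b)" by (metis card_image)
  then show ?thesis by (simp add: cross_def CS_def)
qed

lemma st_restr: "strict_total ltS \<Longrightarrow> strict_total (\<lambda>x y. ltS (Inl x) (Inl y))"
  "strict_total ltS \<Longrightarrow> strict_total (\<lambda>x y. ltS (Inr x) (Inr y))"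
  unfolding strict_total_def by blast+

lemma dodd_split: "dodd (sumkind kV kW) (map Inl a @ map Inr b) \<longleftrightarrow> dodd kV a \<and> dodd kW b"
  unfolding dodd_def
proof safe
  fix x assume "\<forall>x. sumkind kV kW x = KOdd \<longrightarrow> count (mset (map Inl a @ map Inr b)) x \<le> 1" "kV x = KOdd"
  then show "count (mset a) x \<le> 1" using count_split(1)[of a b x] by (metis sumkind_def old.sum.simps(5))
next
  fix x assume "\<forall>x. sumkind kV kW x = KOdd \<longrightarrow> count (mset (map Inl a @ map Inr b)) x \<le> 1" "kW x = KOdd"
  then show "count (mset b) x \<le> 1" using count_split(2)[of a b x] by (metis sumkind_def old.sum.simps(6))
next
  fix x assume "\<forall>x. kV x = KOdd \<longrightarrow> count (mset a) x \<le> 1" "\<forall>x. kW x = KOdd \<longrightarrow> count (mset b) x \<le> 1"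
    "sumkind kV kW x = KOdd"
  then show "count (mset (map Inl a @ map Inr b)) x \<le> 1"
    by (cases x) (auto simp: count_split sumkind_def)
qed

lemma SPLIT:
  fixes kV :: "'v::finite \<Rightarrow> kind" and kW :: "'w::finite \<Rightarrow> kind"
  assumes stV: "strict_total ltV" and stW: "strict_total ltW" and stS: "strict_total ltS"
    and dV: "dodd kV bV" and dW: "dodd kW bW"
  shows "yvec kV ltV bV cV * yvec kW ltW bW cW =
     (yvec (sumkind kV kW) ltS (map Inl bV @ map Inr bW) (map Inl cV @ map Inr cW) :: 'r::comm_ring_1)"
proof (cases "mset cV = mset bV \<and> mset cW = mset bW")
  case True
  let ?lV = "\<lambda>x y. ltS (Inl x) (Inl y)" and ?lW = "\<lambda>x y. ltS (Inr x) (Inr y)"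
  have cr: "cross kV kW ltS cV cW = cross kV kW ltS bV bW" using True by (intro cross_mset) auto
  have oV: "((-1::'r) ^ (inv_odd kV ?lV bV + inv_odd kV ?lV cV)) = (-1) ^ (inv_odd kV ltV bV + inv_odd kV ltV cV)"
    using OC[OF dV _ st_restr(1)[OF stS] stV] True by blast
  have oW: "((-1::'r) ^ (inv_odd kW ?lW bW + inv_odd kW ?lW cW)) = (-1) ^ (inv_odd kW ltW bW + inv_odd kW ltW cW)"
    using OC[OF dW _ st_restr(2)[OF stS] stW] True by blast
  have "(-1::'r) ^ (inv_odd (sumkind kV kW) ltS (map Inl bV @ map Inr bW) + inv_odd (sumkind kV kW) ltS (map Inl cV @ map Inr cW))
     = ((-1) ^ (inv_odd kV ?lV bV + inv_odd kV ?lV cV)) * ((-1) ^ (inv_odd kW ?lW bW + inv_odd kW ?lW cW))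
       * ((-1) ^ cross kV kW ltS bV bW * (-1) ^ cross kV kW ltS bV bW)"
    unfolding DEC cr by (simp add: power_add algebra_simps)
  also have "\<dots> = (-1) ^ (inv_odd kV ltV bV + inv_odd kV ltV cV) * (-1) ^ (inv_odd kW ltW bW + inv_odd kW ltW cW)"
    unfolding oV oW neg1_sq by simp
  finally have sg: "(-1::'r) ^ (inv_odd (sumkind kV kW) ltS (map Inl bV @ map Inr bW) + inv_odd (sumkind kV kW) ltS (map Inl cV @ map Inr cW))
     = (-1) ^ (inv_odd kV ltV bV + inv_odd kV ltV cV) * (-1) ^ (inv_odd kW ltW bW + inv_odd kW ltW cW)" .
  have me: "mset (map Inl cV @ map Inr cW) = mset (map Inl bV @ map Inr bW)"
    using True by (simp only: mset_split)
  show ?thesis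
    unfolding yvec_alt if_P[OF me] using True by (simp add: cfact_split sg algebra_simps)
next
  case False
  have nz: "mset (map Inl cV @ map Inr cW) \<noteq> mset (map Inl bV @ map Inr bW)"
    using False by (simp only: mset_split) simp
  have "yvec kV ltV bV cV * yvec kW ltW bW cW = (0::'r)" using False by (auto simp: yvec_alt)
  moreover have "yvec (sumkind kV kW) ltS (map Inl bV @ map Inr bW) (map Inl cV @ map Inr cW) = (0::'r)"
    by (simp only: yvec_alt if_not_P[OF nz])
  ultimately show ?thesis by simp
qed



definition submod :: "('a \<Rightarrow> 'r::comm_ring_1) set \<Rightarrow> bool" where
  "submod T \<longleftrightarrow> (\<lambda>_. 0) \<in> T \<and> (\<forall>x\<in>T. \<forall>y\<in>T. \<forall>r. (\<lambda>i. x i + r * y i) \<in> T)"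

lemma submodD: "submod T \<Longrightarrow> (\<lambda>_. 0) \<in> T" "submod T \<Longrightarrow> x \<in> T \<Longrightarrow> y \<in> T \<Longrightarrow> (\<lambda>i. x i + r * y i) \<in> T"
  unfolding submod_def by blast+

lemma submod_smult: "submod T \<Longrightarrow> x \<in> T \<Longrightarrow> (\<lambda>i. r * x i) \<in> T"
  using submodD(2)[of T "\<lambda>_. 0" x r] submodD(1)[of T] by simp

lemma submod_sum:
  assumes "submod T" "finite K" "\<And>k. k \<in> K \<Longrightarrow> f k \<in> T"
  shows "(\<lambda>x. \<Sum>k\<in>K. f k x) \<in> T"
  using assms(2,3)
proof (induct K rule: finite_induct)
  case empty then show ?case using submodD(1)[OF assms(1)] by simp
next
  case (insert a F)
  have "(\<lambda>x. (\<Sum>k\<in>F. f k x) + 1 * f a x) \<in> T"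
    by (rule submodD(2)[OF assms(1)]) (use insert in auto)
  then show ?case using insert by (simp add: add.commute)
qed

lemma rspan_sub:
  assumes "submod T" "S \<subseteq> T"
  shows "rspan S \<subseteq> T"
proof
  fix v assume "v \<in> rspan S"
  then obtain F c where F: "finite F" "F \<subseteq> S" "v = (\<lambda>x. \<Sum>s\<in>F. c s * s x)" unfolding rspan_def by blast
  have "(\<lambda>x. \<Sum>s\<in>F. c s * s x) \<in> T"
    using submod_sum[OF assms(1) F(1), of "\<lambda>s x. c s * s x"] submod_smult[OF assms(1)] F(2) assms(2) by blast
  then show "v \<in> T" using F by simp
qed

lemma rspan_gen: "s \<in> S \<Longrightarrow> s \<in> rspan S"
  unfolding rspan_def by (rule CollectI, rule exI[of _ "{s}"], rule exI[of _ "\<lambda>_. 1"]) auto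

lemma rspan_submod: "submod (rspan S)"
  unfolding submod_def
proof (intro conjI ballI allI)
  show "(\<lambda>_. 0) \<in> rspan S" unfolding rspan_def by (rule CollectI, rule exI[of _ "{}"]) auto
  fix v w r assume "v \<in> rspan S" "w \<in> rspan S"
  then obtain F c G e where F: "finite F" "F \<subseteq> S" "v = (\<lambda>x. \<Sum>s\<in>F. c s * s x)"
    and G: "finite G" "G \<subseteq> S" "w = (\<lambda>x. \<Sum>s\<in>G. e s * s x)" unfolding rspan_def by blast
  define h where "h s = (if s \<in> F then c s else 0) + r * (if s \<in> G then e s else 0)" for s
  have "(\<lambda>i. v i + r * w i) = (\<lambda>x. \<Sum>s\<in>F \<union> G. h s * s x)"
  proof
    fix x
    have 1: "(\<Sum>s\<in>F. c s * s x) = (\<Sum>s\<in>F \<union> G. (if s \<in> F then c s else 0) * s x)"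
      using F G by (intro sum.mono_neutral_cong_left) auto
    have 2: "(\<Sum>s\<in>G. e s * s x) = (\<Sum>s\<in>F \<union> G. (if s \<in> G then e s else 0) * s x)"
      using F G by (intro sum.mono_neutral_cong_left) auto
    show "v x + r * w x = (\<Sum>s\<in>F \<union> G. h s * s x)"
      unfolding F(3) G(3) 1 2 h_def by (simp add: sum_distrib_left sum.distrib algebra_simps)
  qed
  then show "(\<lambda>i. v i + r * w i) \<in> rspan S" unfolding rspan_def using F G by blast
qed

lemma submod_support: "submod {t :: 'a \<Rightarrow> 'r::comm_ring_1. \<forall>c. t c \<noteq> 0 \<longrightarrow> P c}"
  unfolding submod_def by auto (metis add_0 mult_zero_right)

lemma submod_preimage:
  assumes "submod T" "f (\<lambda>_. 0) = (\<lambda>_. 0)" "\<And>x y r. f (\<lambda>i. x i + r * y i) = (\<lambda>i. f x i + r * f y i)"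
  shows "submod {x. f x \<in> T}"
  using assms unfolding submod_def by auto

lemma act_lin: "act kd d \<sigma> (\<lambda>i. x i + r * y i) = (\<lambda>c. act kd d \<sigma> x c + r * act kd d \<sigma> y c)"
proof
  fix c
  have "act kd d \<sigma> (\<lambda>i. x i + r * y i) c = (\<Sum>bs\<in>{bs. length bs = d}.
     (if c = permact \<sigma> bs then (-1) ^ sgn_exp kd \<sigma> bs * x bs else 0) + r * (if c = permact \<sigma> bs then (-1) ^ sgn_exp kd \<sigma> bs * y bs else 0))"
    unfolding act_def by (intro sum.cong) (auto simp: algebra_simps)
  then show "act kd d \<sigma> (\<lambda>i. x i + r * y i) c = act kd d \<sigma> x c + r * act kd d \<sigma> y c"
    by (simp add: act_def sum.distrib sum_distrib_left)
qed

lemma act_zero: "act kd d \<sigma> (\<lambda>_. 0) = (\<lambda>_. (0::'r::comm_ring_1))"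
  unfolding act_def by (rule ext, rule sum.neutral) simp

lemma star_lin: "star kd k d (\<lambda>i. x i + r * y i) = (\<lambda>c. star kd k d x c + r * star kd k d y c)"
  by (simp add: star_def act_lin fun_eq_iff sum.distrib sum_distrib_left)

lemma star_zero: "star kd k d (\<lambda>_. 0) = (\<lambda>_. 0)"
  by (simp add: star_def act_zero)

lemma ptensor_lin1: "ptensor k (\<lambda>i. x i + r * y i) z = (\<lambda>c. ptensor k x z c + r * ptensor k y z c)"
  by (auto simp: ptensor_def fun_eq_iff algebra_simps)

lemma ptensor_lin2: "ptensor k z (\<lambda>i. x i + r * y i) = (\<lambda>c. ptensor k z x c + r * ptensor k z y c)"
  by (auto simp: ptensor_def fun_eq_iff algebra_simps)

lemma ptensor_zero: "ptensor k (\<lambda>_. 0) z = (\<lambda>_. 0)" "ptensor k z (\<lambda>_. 0) = (\<lambda>_. 0)"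
  by (auto simp: ptensor_def fun_eq_iff)

lemma tGamma_submod: "submod (tGamma kd lt n)"
  unfolding tGamma_def by (rule rspan_submod)

lemma tGamma_len:
  assumes "y \<in> tGamma kd lt n" "y c \<noteq> 0"
  shows "length c = n"
proof -
  have "tGamma kd lt n \<subseteq> {t. \<forall>c. t c \<noteq> 0 \<longrightarrow> length c = n}"
    unfolding tGamma_def
  proof (rule rspan_sub[OF submod_support], clarify)
    fix bs c assume "bs \<in> Seq kd n" "yvec kd lt bs c \<noteq> 0"
    then show "length c = n" using yvec_nz[of kd lt bs c] mset_eq_length by (fastforce simp: Seq_def)
  qed
  then show ?thesis using assms by blast
qed

definition pat :: "nat \<Rightarrow> ('v + 'w) list \<Rightarrow> bool" where
  "pat k c \<longleftrightarrow> (\<forall>x\<in>set (take k c). isl x) \<and> (\<forall>x\<in>set (drop k c). \<not> isl x)"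

lemma pat_iff:
  assumes lc: "length c = d" and kd: "k \<le> d"
  shows "pat k c \<longleftrightarrow> (\<forall>j<d. isl (c!j) \<longleftrightarrow> j < k)"
proof
  assume p: "pat k c"
  show "\<forall>j<d. isl (c!j) \<longleftrightarrow> j < k"
  proof (intro allI impI)
    fix j assume j: "j < d"
    show "isl (c!j) \<longleftrightarrow> j < k"
    proof (cases "j < k")
      case True
      then have "c!j \<in> set (take k c)" using j lc kd by (metis in_set_conv_nth length_take min_def not_le nth_take)
      then show ?thesis using p True by (simp add: pat_def)
    next
      case False
      then have "drop k c ! (j - k) = c ! j" using j lc by simp
      moreover have "j - k < length (drop k c)" using False j lc by simp
      ultimately have "c!j \<in> set (drop k c)" by (metis nth_mem)
      then show ?thesis using p False by (simp add: pat_def)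
    qed
  qed
next
  assume h: "\<forall>j<d. isl (c!j) \<longleftrightarrow> j < k"
  show "pat k c" unfolding pat_def
  proof (intro conjI ballI)
    fix x assume "x \<in> set (take k c)"
    then obtain i where "i < length (take k c)" "x = take k c ! i" by (metis in_set_conv_nth)
    then show "isl x" using h lc kd by auto
  next
    fix x assume "x \<in> set (drop k c)"
    then obtain i where "i < length (drop k c)" "x = drop k c ! i" by (metis in_set_conv_nth)
    then show "\<not> isl x" using h lc kd by auto
  qed
qed



lemma PATP:
  assumes sp: "\<sigma> permutes {..<d}" and lc: "length c = d" and kd: "k \<le> d"
  shows "pat k (permact (inv \<sigma>) c) \<longleftrightarrow> Pc {i. i < d \<and> isl (c!i)} k d \<sigma>"
proof -
  have ip: "inv \<sigma> permutes {..<d}" using sp by (rule permutes_inv)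
  have l0: "length (permact (inv \<sigma>) c) = d" using lc by simp
  have n0: "j < d \<Longrightarrow> permact (inv \<sigma>) c ! j = c ! (inv \<sigma> j)" for j
    using permact_nth[of "inv \<sigma>" c j] ip lc by simp
  have sig_lt: "i < d \<Longrightarrow> \<sigma> i < d" for i using sp permutes_in_image by fastforce
  have isig_lt: "i < d \<Longrightarrow> inv \<sigma> i < d" for i using ip permutes_in_image by fastforce
  have isig_sig: "inv \<sigma> (\<sigma> y) = y" for y using sp permutes_inverses(2) by fastforce
  have sig_isig: "\<sigma> (inv \<sigma> y) = y" for y using sp permutes_inverses(1) by fastforce
  have "pat k (permact (inv \<sigma>) c) \<longleftrightarrow> (\<forall>j<d. isl (c ! (inv \<sigma> j)) \<longleftrightarrow> j < k)"
    using pat_iff[OF l0 kd] n0 by simp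
  also have "\<dots> \<longleftrightarrow> (\<forall>i<d. isl (c ! i) \<longleftrightarrow> \<sigma> i < k)"
  proof
    assume h: "\<forall>j<d. isl (c ! (inv \<sigma> j)) \<longleftrightarrow> j < k"
    show "\<forall>i<d. isl (c ! i) \<longleftrightarrow> \<sigma> i < k"
    proof (intro allI impI)
      fix i assume "i < d"
      then show "isl (c ! i) \<longleftrightarrow> \<sigma> i < k" using h[rule_format, of "\<sigma> i"] sig_lt isig_sig by simp
    qed
  next
    assume h: "\<forall>i<d. isl (c ! i) \<longleftrightarrow> \<sigma> i < k"
    show "\<forall>j<d. isl (c ! (inv \<sigma> j)) \<longleftrightarrow> j < k"
    proof (intro allI impI)
      fix j assume "j < d"
      then show "isl (c ! (inv \<sigma> j)) \<longleftrightarrow> j < k" using h[rule_format, of "inv \<sigma> j"] isig_lt sig_isig by simp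
    qed
  qed
  also have "\<dots> \<longleftrightarrow> Pc {i. i < d \<and> isl (c!i)} k d \<sigma>" by (auto simp: Pc_def)
  finally show ?thesis .
qed

lemma card_isl: "card {i. i < length c \<and> isl (c!i)} = size (filter_mset isl (mset c))"
  by (metis length_filter_conv_card mset_filter size_mset)

lemma PT:
  fixes kV :: "'v::finite \<Rightarrow> kind" and kW :: "'w::finite \<Rightarrow> kind"
  assumes stV: "strict_total ltV" and stW: "strict_total ltW" and stS: "strict_total ltS"
    and dV: "dodd kV bV" and dW: "dodd kW bW"
  shows "ptensor k (yvec kV ltV bV) (yvec kW ltW bW) c =
     (if pat k c then (yvec (sumkind kV kW) ltS (map Inl bV @ map Inr bW) c :: 'r::comm_ring_1) else 0)"
proof (cases "pat k c")
  case True
  define cV where "cV = map projl (take k c)"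
  define cW where "cW = map projr (drop k c)"
  have "map Inl cV = take k c" unfolding cV_def using True
    by (simp add: pat_def map_idI)
  moreover have "map Inr cW = drop k c" unfolding cW_def using True
    by (simp add: pat_def map_idI)
  ultimately have c: "c = map Inl cV @ map Inr cW" by simp
  have "ptensor k (yvec kV ltV bV) (yvec kW ltW bW) c = yvec kV ltV bV cV * yvec kW ltW bW cW"
    using True by (simp add: ptensor_def pat_def cV_def cW_def)
  also have "\<dots> = yvec (sumkind kV kW) ltS (map Inl bV @ map Inr bW) c"
    unfolding c by (rule SPLIT[OF stV stW stS dV dW])
  finally show ?thesis using True by simp
next
  case False
  then have np: "\<not> ((\<forall>x\<in>set (take k c). isl x) \<and> (\<forall>x\<in>set (drop k c). \<not> isl x))" unfolding pat_def .
  show ?thesis unfolding ptensor_def if_not_P[OF np] using False by simp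
qed

lemma M4:
  fixes kV :: "'v::finite \<Rightarrow> kind" and kW :: "'w::finite \<Rightarrow> kind"
  assumes stV: "strict_total ltV" and stW: "strict_total ltW" and stS: "strict_total ltS"
    and dV: "dodd kV bV" and dW: "dodd kW bW" and lV: "length bV = k" and lW: "length bW = d - k"
    and kd: "k \<le> d"
  shows "star (sumkind kV kW) k d (ptensor k (yvec kV ltV bV) (yvec kW ltW bW)) =
     (yvec (sumkind kV kW) ltS (map Inl bV @ map Inr bW) :: _ \<Rightarrow> 'r::comm_ring_1)"
proof
  fix c
  define B where "B = map Inl bV @ map Inr bW"
  define kd' where "kd' = sumkind kV kW"
  define w where "w = ptensor k (yvec kV ltV bV) (yvec kW ltW bW :: _ \<Rightarrow> 'r)"
  have dB: "dodd kd' B" unfolding B_def kd'_def using dV dW by (simp add: dodd_split)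
  have lB: "length B = d" using lV lW kd by (simp add: B_def)
  have w: "w c' = (if pat k c' then yvec kd' ltS B c' else 0)" for c'
    unfolding w_def B_def kd'_def by (rule PT[OF stV stW stS dV dW])
  have trm: "act kd' d \<sigma> w c = (if length c = d \<and> pat k (permact (inv \<sigma>) c) then yvec kd' ltS B c else 0)"
    if "\<sigma> \<in> minreps k d" for \<sigma>
  proof -
    have sp: "\<sigma> permutes {..<d}" using that by (rule minreps_perm)
    show ?thesis
    proof (cases "length c = d")
      case True
      then show ?thesis using act_eq[OF sp, of kd' w c] w yvec_inv[OF stS dB, of \<sigma> c, where 'r='r] sp by simp
    next
      case False then show ?thesis using act_eq[OF sp, of kd' w c] by simp
    qed
  qed
  have "star kd' k d w c = (\<Sum>\<sigma>\<in>minreps k d. if length c = d \<and> pat k (permact (inv \<sigma>) c) then yvec kd' ltS B c else 0)"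
    unfolding star_def using trm by (intro sum.cong) auto
  also have "\<dots> = yvec kd' ltS B c"
  proof (cases "mset c = mset B")
    case True
    then have lc: "length c = d" using lB mset_eq_length by metis
    define S where "S = {i. i < d \<and> isl (c!i)}"
    have "card S = size (filter_mset isl (mset c))" unfolding S_def using card_isl[of c] lc by simp
    also have "\<dots> = size (filter_mset isl (mset B))" using True by simp
    also have "\<dots> = length (filter isl B)" by (metis mset_filter size_mset)
    also have "\<dots> = k" using lV by (simp add: B_def filter_map o_def)
    finally have cS: "card S = k" .
    have SD: "S \<subseteq> {..<d}" by (auto simp: S_def)
    have "(\<Sum>\<sigma>\<in>minreps k d. if length c = d \<and> pat k (permact (inv \<sigma>) c) then yvec kd' ltS B c else 0)
       = (\<Sum>\<sigma>\<in>minreps k d. if Pc S k d \<sigma> then yvec kd' ltS B c else 0)"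
      using PATP[OF minreps_perm lc kd] lc unfolding S_def by (intro sum.cong) auto
    also have "\<dots> = yvec kd' ltS B c" by (rule sum_minreps_P[OF SD cS])
    finally show ?thesis .
  next
    case False
    then have z: "yvec kd' ltS B c = (0::'r)" by (simp add: yvec_alt)
    show ?thesis unfolding z by (rule sum.neutral) simp
  qed
  finally show "star (sumkind kV kW) k d (ptensor k (yvec kV ltV bV) (yvec kW ltW bW)) c =
     (yvec (sumkind kV kW) ltS (map Inl bV @ map Inr bW) c :: 'r)"
    by (simp add: w_def kd'_def B_def)
qed



lemma permact_id[simp]: "permact id c = c"
  by (simp add: permact_def map_nth)

lemma sgn_exp_id[simp]: "sgn_exp kd id c = 0"
proof -
  have "{(k, l). k < l \<and> l < length c \<and> inv id l < inv id k \<and> kd (c ! k) = KOdd \<and> kd (c ! l) = KOdd} = {}"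
    by (auto simp: inv_id)
  then show ?thesis unfolding sgn_exp_def by (simp only: card.empty)
qed

lemma patcnt:
  assumes "length c = d" "k \<le> d" "pat k c"
  shows "size (filter_mset isl (mset c)) = k"
proof -
  have "{i. i < length c \<and> isl (c!i)} = {..<k}"
    using pat_iff[OF assms(1,2)] assms by auto
  then show ?thesis using card_isl[of c] by simp
qed

lemma STARPAT:
  fixes t :: "('v::finite + 'w::finite) list \<Rightarrow> 'r::comm_ring_1" and kd :: "'v + 'w \<Rightarrow> kind"
  assumes supp: "\<And>c'. t c' \<noteq> 0 \<Longrightarrow> length c' = d \<and> pat j c'" and jd: "j \<le> d"
    and lc: "length c = d" and pc: "pat k c" and kd: "k \<le> d"
  shows "star kd j d t c = (if j = k then t c else 0)"
proof -
  have trm: "act kd d \<sigma> t c = (-1) ^ sgn_exp kd \<sigma> (permact (inv \<sigma>) c) * t (permact (inv \<sigma>) c)"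
    if "\<sigma> \<in> minreps j d" for \<sigma>
    using act_eq[OF minreps_perm[OF that], of kd t c] lc by simp
  have msetc0: "mset (permact (inv \<sigma>) c) = mset c" if "\<sigma> \<in> minreps j d" for \<sigma>
    using mset_permact[of "inv \<sigma>" c] permutes_inv[OF minreps_perm[OF that]] lc by simp
  have ck: "size (filter_mset isl (mset c)) = k" by (rule patcnt[OF lc kd pc])
  show ?thesis
  proof (cases "j = k")
    case False
    have "act kd d \<sigma> t c = 0" if "\<sigma> \<in> minreps j d" for \<sigma>
    proof (cases "t (permact (inv \<sigma>) c) = 0")
      case False
      then have "length (permact (inv \<sigma>) c) = d \<and> pat j (permact (inv \<sigma>) c)" using supp by blast
      then have "size (filter_mset isl (mset (permact (inv \<sigma>) c))) = j" using patcnt jd by blast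
      then have "j = k" using msetc0[OF that] ck by simp
      then show ?thesis using \<open>j \<noteq> k\<close> by simp
    qed (simp add: trm[OF that])
    then show ?thesis unfolding star_def using False by simp
  next
    case True
    define S where "S = {i. i < d \<and> isl (c!i)}"
    have SD: "S \<subseteq> {..<d}" by (auto simp: S_def)
    have Sk: "S = {..<k}" using pat_iff[OF lc kd] pc kd by (auto simp: S_def)
    have cS: "card S = k" using Sk by simp
    have "act kd d \<sigma> t c = (if Pc S k d \<sigma> then act kd d \<sigma> t c else 0)" if "\<sigma> \<in> minreps j d" for \<sigma>
    proof (cases "Pc S k d \<sigma>")
      case False
      then have "\<not> pat k (permact (inv \<sigma>) c)" using PATP[OF minreps_perm[OF that] lc kd] by (simp add: S_def)
      then have "t (permact (inv \<sigma>) c) = 0" using supp True by blast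
      then show ?thesis using trm[OF that] by simp
    qed simp
    then have "star kd j d t c = (\<Sum>\<sigma>\<in>minreps k d. if Pc S k d \<sigma> then act kd d \<sigma> t c else 0)"
      unfolding star_def using True by (intro sum.cong) auto
    also have "\<dots> = act kd d (sigS S k d) t c" by (rule sum_minreps_P[OF SD cS])
    also have "sigS S k d = id"
    proof -
      have "Pc S k d id" using Sk by (auto simp: Pc_def)
      then show ?thesis using minreps_unique[OF SD cS id_minreps] by simp
    qed
    also have "act kd d id t c = t c" using act_eq[of id d kd t c] lc by (simp add: inv_id)
    finally show ?thesis using True by simp
  qed
qed



lemma Phi_lin: "Phi kV kW d (\<lambda>k x. m k x + r * m' k x) = (\<lambda>x. Phi kV kW d m x + r * Phi kV kW d m' x)"
  unfolding Phi_def
  by (simp add: star_lin[of _ _ _ "m _" r "m' _", simplified] sum.distrib sum_distrib_left)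

lemma tens_submod: "submod (tens_sub kV ltV kW ltW k l)"
  unfolding tens_sub_def by (rule rspan_submod)

lemma tens_supp:
  fixes kV :: "'v::finite \<Rightarrow> kind" and kW :: "'w::finite \<Rightarrow> kind"
  assumes "t \<in> (tens_sub kV ltV kW ltW k (d - k) :: (_ \<Rightarrow> 'r::comm_ring_1) set)" "k \<le> d" "t c \<noteq> 0"
  shows "length c = d \<and> pat k c"
proof -
  have "tens_sub kV ltV kW ltW k (d - k) \<subseteq> {t :: _ \<Rightarrow> 'r. \<forall>c. t c \<noteq> 0 \<longrightarrow> length c = d \<and> pat k c}"
    unfolding tens_sub_def
  proof (rule rspan_sub[OF submod_support], clarify)
    fix y y' c
    assume y: "y \<in> (tGamma kV ltV k :: (_ \<Rightarrow> 'r) set)" and y': "y' \<in> (tGamma kW ltW (d - k) :: (_ \<Rightarrow> 'r) set)"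
      and nz: "ptensor k y y' c \<noteq> 0"
    then have p: "pat k c" and n1: "y (map projl (take k c)) \<noteq> 0" and n2: "y' (map projr (drop k c)) \<noteq> 0"
      by (auto simp: ptensor_def pat_def split: if_splits)
    have "length (map projl (take k c)) = k" using tGamma_len[OF y n1] .
    moreover have "length (map projr (drop k c)) = d - k" using tGamma_len[OF y' n2] .
    ultimately have "length c = d" using assms(2) by simp
    then show "length c = d \<and> pat k c" using p by simp
  qed
  then show ?thesis using assms by blast
qed

theorem lemma3p5:
  fixes kV :: "'v::finite \<Rightarrow> kind" and ltV :: "'v \<Rightarrow> 'v \<Rightarrow> bool"
    and kW :: "'w::finite \<Rightarrow> kind" and ltW :: "'w \<Rightarrow> 'w \<Rightarrow> bool"
    and ltS :: "('v + 'w) \<Rightarrow> ('v + 'w) \<Rightarrow> bool"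
    and d :: nat
  assumes "pid TYPE('r::{idom, ring_char_0})"
    and "strict_total ltV" and "strict_total ltW" and "strict_total ltS"
  shows "bij_betw (Phi kV kW d) (dsum_dom kV ltV kW ltW d :: (nat \<Rightarrow> ('v + 'w) list \<Rightarrow> 'r) set)
                  (tGamma (sumkind kV kW) ltS d)
    \<and> (\<forall>m\<in>dsum_dom kV ltV kW ltW d. \<forall>m'\<in>dsum_dom kV ltV kW ltW d. \<forall>r::'r.
          Phi kV kW d (\<lambda>k x. m k x + r * m' k x) = (\<lambda>x. Phi kV kW d m x + r * Phi kV kW d m' x))
    \<and> (\<forall>m\<in>(dsum_dom kV ltV kW ltW d :: (nat \<Rightarrow> ('v + 'w) list \<Rightarrow> 'r) set). \<forall>p.
          (\<forall>k. homog (sumkind kV kW) p (m k)) \<longrightarrow> homog (sumkind kV kW) p (Phi kV kW d m))"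
proof -
  note stV = assms(2) and stW = assms(3) and stS = assms(4)
  define kd where "kd = sumkind kV kW"
  define D where "D = (dsum_dom kV ltV kW ltW d :: (nat \<Rightarrow> ('v + 'w) list \<Rightarrow> 'r) set)"
  define TG where "TG = (tGamma kd ltS d :: (('v + 'w) list \<Rightarrow> 'r) set)"
  have TGs: "submod TG" unfolding TG_def by (rule tGamma_submod)
  have lin: "Phi kV kW d (\<lambda>k x. m k x + r * m' k x) = (\<lambda>x. Phi kV kW d m x + r * Phi kV kW d m' x)"
    for m m' :: "nat \<Rightarrow> ('v + 'w) list \<Rightarrow> 'r" and r by (rule Phi_lin)
  have D0: "(\<lambda>k _. 0) \<in> D"
    unfolding D_def dsum_dom_def using submodD(1)[OF tens_submod] by auto
  have Dlin: "(\<lambda>k x. m k x + r * m' k x) \<in> D" if "m \<in> D" "m' \<in> D" for m m' r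
    using that unfolding D_def dsum_dom_def by (auto intro!: submodD(2)[OF tens_submod])
  have star_in: "star kd k d t \<in> TG" if t: "t \<in> tens_sub kV ltV kW ltW k (d - k)" and kd: "k \<le> d" for k t
  proof -
    have sp: "submod {t. star kd k d t \<in> TG}"
      by (rule submod_preimage[OF TGs star_zero star_lin])
    have inner: "star kd k d (ptensor k (yvec kV ltV bV) y') \<in> TG" if bV: "bV \<in> Seq kV k" and y': "y' \<in> tGamma kW ltW (d - k)" for bV y'
    proof -
      have s2: "submod {y'. star kd k d (ptensor k (yvec kV ltV bV) y') \<in> TG}"
        using TGs unfolding submod_def by (auto simp: ptensor_zero ptensor_lin2 star_zero star_lin)
      have "tGamma kW ltW (d - k) \<subseteq> {y'. star kd k d (ptensor k (yvec kV ltV bV) y') \<in> TG}"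
        unfolding tGamma_def
      proof (rule rspan_sub[OF s2], clarify)
        fix bW assume bW: "bW \<in> Seq kW (d - k)"
        have dV: "dodd kV bV" and lV: "length bV = k" using bV by (auto simp: Seq_dodd)
        have dW: "dodd kW bW" and lW: "length bW = d - k" using bW by (auto simp: Seq_dodd)
        have "star kd k d (ptensor k (yvec kV ltV bV) (yvec kW ltW bW)) = yvec kd ltS (map Inl bV @ map Inr bW)"
          unfolding kd_def by (rule M4[OF stV stW stS dV dW lV lW kd])
        moreover have "map Inl bV @ map Inr bW \<in> Seq kd d"
          using dV dW lV lW kd by (simp add: Seq_dodd kd_def dodd_split)
        ultimately show "star kd k d (ptensor k (yvec kV ltV bV) (yvec kW ltW bW)) \<in> TG"
          unfolding TG_def tGamma_def by (auto intro: rspan_gen)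
      qed
      then show ?thesis using y' by blast
    qed
    have gens: "star kd k d (ptensor k y y') \<in> TG"
      if y: "y \<in> tGamma kV ltV k" and y': "y' \<in> tGamma kW ltW (d - k)" for y y'
    proof -
      have s1: "submod {y. \<forall>y'\<in>tGamma kW ltW (d - k). star kd k d (ptensor k y y') \<in> TG}"
        using TGs unfolding submod_def by (auto simp: ptensor_zero ptensor_lin1 star_zero star_lin)
      have "tGamma kV ltV k \<subseteq> {y. \<forall>y'\<in>tGamma kW ltW (d - k). star kd k d (ptensor k y y') \<in> TG}"
        unfolding tGamma_def[of kV ltV k]
        by (rule rspan_sub[OF s1]) (auto intro: inner)
      then show ?thesis using y y' by blast
    qed
    have "tens_sub kV ltV kW ltW k (d - k) \<subseteq> {t. star kd k d t \<in> TG}"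
      unfolding tens_sub_def by (rule rspan_sub[OF sp]) (auto intro: gens)
    then show ?thesis using t by blast
  qed
  have img_sub: "Phi kV kW d m \<in> TG" if "m \<in> D" for m
  proof -
    have "(\<lambda>x. \<Sum>k\<le>d. star kd k d (m k) x) \<in> TG"
      by (rule submod_sum[OF TGs]) (use that star_in in \<open>auto simp: D_def dsum_dom_def\<close>)
    then show ?thesis by (simp add: Phi_def kd_def)
  qed
  have Phi_pat: "Phi kV kW d m c = m k c" if m: "m \<in> D" and k: "k \<le> d" and lc: "length c = d" and pc: "pat k c" for m k c
  proof -
    have "Phi kV kW d m c = (\<Sum>j\<le>d. if j = k then m k c else 0)"
      unfolding Phi_def
    proof (rule sum.cong[OF refl])
      fix j assume "j \<in> {..d}"
      then have jd: "j \<le> d" by simp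
      have supp: "length c' = d \<and> pat j c'" if "m j c' \<noteq> 0" for c'
        using tens_supp[of "m j" kV ltV kW ltW j d c'] m jd that by (auto simp: D_def dsum_dom_def)
      show "star (sumkind kV kW) j d (m j) c = (if j = k then m k c else 0)"
        using STARPAT[of "m j" d j c k "sumkind kV kW", OF supp jd lc pc k] by simp
    qed
    also have "\<dots> = m k c" using k by simp
    finally show ?thesis .
  qed
  have m_supp: "m k c = 0" if "m \<in> D" "\<not> (k \<le> d \<and> length c = d \<and> pat k c)" for m k c
  proof (cases "k \<le> d")
    case True
    then show ?thesis using that tens_supp[of "m k" kV ltV kW ltW k d c] by (auto simp: D_def dsum_dom_def)
  next
    case False
    then show ?thesis using that by (auto simp: D_def dsum_dom_def)
  qed
  have inj: "inj_on (Phi kV kW d) D"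
  proof (rule inj_onI)
    fix m m' assume m: "m \<in> D" and m': "m' \<in> D" and eq: "Phi kV kW d m = Phi kV kW d m'"
    show "m = m'"
    proof (intro ext)
      fix k c
      show "m k c = m' k c"
      proof (cases "k \<le> d \<and> length c = d \<and> pat k c")
        case True
        then show ?thesis using Phi_pat[OF m, of k c] Phi_pat[OF m', of k c] eq by simp
      next
        case False
        then show ?thesis using m_supp[OF m False] m_supp[OF m' False] by simp
      qed
    qed
  qed
  have Ims: "submod (Phi kV kW d ` D)"
    unfolding submod_def
  proof (intro conjI ballI allI)
    have z: "Phi kV kW d (\<lambda>k _. 0 :: 'r) = (\<lambda>_. 0)" by (simp add: Phi_def star_zero)
    show "(\<lambda>_. 0) \<in> Phi kV kW d ` D" using image_eqI[where f="Phi kV kW d" and x="\<lambda>k _. 0", OF z[symmetric] D0] .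
  next
    fix x y r assume "x \<in> Phi kV kW d ` D" "y \<in> Phi kV kW d ` D"
    then obtain m m' where "m \<in> D" "m' \<in> D" "x = Phi kV kW d m" "y = Phi kV kW d m'" by blast
    then show "(\<lambda>i. x i + r * y i) \<in> Phi kV kW d ` D"
      by (intro image_eqI[where f="Phi kV kW d", OF _ Dlin[of m m' r]]) (simp_all add: lin)
  qed
  have surj: "TG \<subseteq> Phi kV kW d ` D"
    unfolding TG_def tGamma_def
  proof (rule rspan_sub[OF Ims], clarify)
    fix B assume B: "B \<in> Seq kd d"
    define bV where "bV = map projl (filter isl B)"
    define bW where "bW = map projr (filter (\<lambda>x. \<not> isl x) B)"
    define k where "k = length bV"
    define B' where "B' = map Inl bV @ map Inr bW"
    have B'eq: "B' = filter isl B @ filter (\<lambda>x. \<not> isl x) B"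
    proof -
      have 1: "map (Inl \<circ> projl) (filter isl B) = filter isl B"
        by (rule map_idI) (case_tac x, auto)
      have 2: "map (Inr \<circ> projr) (filter (\<lambda>x. \<not> isl x) B) = filter (\<lambda>x. \<not> isl x) B"
        by (rule map_idI) (case_tac x, auto)
      show ?thesis unfolding B'_def bV_def bW_def map_map 1 2 ..
    qed
    have mB: "mset B' = mset B" unfolding B'eq by (simp flip: multiset_partition)
    have lB: "length B = d" and dB: "dodd kd B" using B by (auto simp: Seq_dodd)
    have "dodd kd B'" using dB mB dodd_mset by blast
    then have dV: "dodd kV bV" and dW: "dodd kW bW" unfolding B'_def kd_def by (auto simp: dodd_split)
    have "length B' = d" using mB lB mset_eq_length by metis
    then have kd: "k \<le> d" and lW: "length bW = d - k" unfolding B'_def k_def by auto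
    define m where "m = (\<lambda>j. if j = k then ptensor k (yvec kV ltV bV) (yvec kW ltW bW) else (\<lambda>_. 0 :: 'r))"
    have "yvec kV ltV bV \<in> tGamma kV ltV k" unfolding tGamma_def
      by (rule rspan_gen) (use dV in \<open>auto simp: Seq_dodd k_def\<close>)
    moreover have "yvec kW ltW bW \<in> tGamma kW ltW (d - k)" unfolding tGamma_def
      by (rule rspan_gen) (use dW lW in \<open>auto simp: Seq_dodd\<close>)
    ultimately have pt: "ptensor k (yvec kV ltV bV) (yvec kW ltW bW) \<in> (tens_sub kV ltV kW ltW k (d - k) :: (_ \<Rightarrow> 'r) set)"
      unfolding tens_sub_def by (auto intro: rspan_gen)
    have mD: "m \<in> D" unfolding D_def dsum_dom_def m_def
      using pt kd submodD(1)[OF tens_submod] by auto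
    have "Phi kV kW d m = (\<lambda>x. \<Sum>j\<le>d. if j = k then star kd k d (ptensor k (yvec kV ltV bV) (yvec kW ltW bW)) x else 0)"
      unfolding Phi_def
    proof (rule ext, rule sum.cong[OF refl])
      fix x j
      show "star (sumkind kV kW) j d (m j) x = (if j = k then star kd k d (ptensor k (yvec kV ltV bV) (yvec kW ltW bW)) x else 0)"
        by (cases "j = k") (simp_all add: m_def kd_def star_zero)
    qed
    also have "\<dots> = star kd k d (ptensor k (yvec kV ltV bV) (yvec kW ltW bW))" using kd by simp
    also have "\<dots> = yvec kd ltS B'"
      unfolding kd_def B'_def by (rule M4[OF stV stW stS dV dW k_def[symmetric] lW kd])
    finally have PB': "Phi kV kW d m = yvec kd ltS B'" .
    have "yvec kd ltS B = (\<lambda>c. (-1) ^ (inv_odd kd ltS B + inv_odd kd ltS B') * yvec kd ltS B' c :: 'r)"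
      by (rule yvec_orbit) (use mB in simp)
    also have "\<dots> \<in> Phi kV kW d ` D"
      by (rule submod_smult[OF Ims], rule image_eqI[where f="Phi kV kW d" and x=m, OF PB'[symmetric] mD])
    finally show "yvec kd ltS B \<in> Phi kV kW d ` D" .
  qed
  have bij: "bij_betw (Phi kV kW d) D TG"
  proof -
    have "Phi kV kW d ` D = TG" using img_sub surj by blast
    then show ?thesis unfolding bij_betw_def using inj by simp
  qed
  have hom: "homog kd p (Phi kV kW d m)" if "m \<in> D" "\<forall>k. homog kd p (m k)" for m p
    unfolding homog_def
  proof (intro allI impI)
    fix c assume nz: "Phi kV kW d m c \<noteq> 0"
    then obtain k where kk: "k \<in> {..d}" "star kd k d (m k) c \<noteq> 0"
      unfolding Phi_def kd_def by (rule sum.not_neutral_contains_not_neutral)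
    from kk(2) obtain \<sigma> where s: "\<sigma> \<in> minreps k d" "act kd d \<sigma> (m k) c \<noteq> 0"
      unfolding star_def by (rule sum.not_neutral_contains_not_neutral)
    have sp: "\<sigma> permutes {..<d}" using s(1) by (rule minreps_perm)
    have lc: "length c = d" and nz0: "m k (permact (inv \<sigma>) c) \<noteq> 0"
      using s(2) act_eq[OF sp, of kd "m k" c] by (auto split: if_splits)
    have "mset (permact (inv \<sigma>) c) = mset c"
      using mset_permact[of "inv \<sigma>" c] permutes_inv[OF sp] lc by simp
    then have "mset (filter (\<lambda>b. kd b = KOdd) (permact (inv \<sigma>) c)) = mset (filter (\<lambda>b. kd b = KOdd) c)"
      by (simp only: mset_filter)
    then have "length (filter (\<lambda>b. kd b = KOdd) (permact (inv \<sigma>) c)) = length (filter (\<lambda>b. kd b = KOdd) c)"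
      by (rule mset_eq_length)
    moreover have "odd (length (filter (\<lambda>b. kd b = KOdd) (permact (inv \<sigma>) c))) = p"
      using that(2) nz0 unfolding homog_def by blast
    ultimately show "odd (length (filter (\<lambda>b. kd b = KOdd) c)) = p" by simp
  qed
  show ?thesis
  proof (intro conjI ballI allI impI)
    show "bij_betw (Phi kV kW d) (dsum_dom kV ltV kW ltW d :: (nat \<Rightarrow> ('v + 'w) list \<Rightarrow> 'r) set)
                  (tGamma (sumkind kV kW) ltS d)"
      using bij unfolding D_def TG_def kd_def .
  next
    fix m m' :: "nat \<Rightarrow> ('v + 'w) list \<Rightarrow> 'r" and r :: 'r
    show "Phi kV kW d (\<lambda>k x. m k x + r * m' k x) = (\<lambda>x. Phi kV kW d m x + r * Phi kV kW d m' x)"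
      by (rule lin)
  next
    fix m :: "nat \<Rightarrow> ('v + 'w) list \<Rightarrow> 'r" and p
    assume "m \<in> dsum_dom kV ltV kW ltW d" "\<forall>k. homog (sumkind kV kW) p (m k)"
    then show "homog (sumkind kV kW) p (Phi kV kW d m)"
      using hom[of m p] unfolding D_def kd_def by simp
  qed
qed


end
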